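(* Let $|q|<1$, $|qa/(yz)|<1$, $k\neq1$, and let $a,k,y,z$ be generic so that no denominator vanishes and all series converge absolutely. Then \begin{multline*} \sum_{j,n\ge0}\frac{(1-kq^{2n+2j})(k/a;q)_{n}(k;q)_{n+2j}(yq^j,zq^j;q)_{n}(qa/y,qa/z;q)_{j}}{(1-k)(q;q)_n(aq;q)_{n+2j}(qk/y,qk/z;q)_{n+j}(q;q)_j}\left(\frac{qa}{yz}\right)^{n}q^{j^2}\\ =\frac{(qk,qk/(yz),qa/y,qa/z;q)_{\infty}}{(qk/y,qk/z,qa,qa/(yz);q)_{\infty}}\cdot\frac{1}{(q,q^4;q^5)_{\infty}}. \end{multline*}
   Context: Notation: $(x;q)_n=\prod_{i=0}^{n-1}(1-xq^i)$, $(x;q)_\infty=\prod_{i\ge0}(1-xq^i)$, and $(x_1,\dots,x_j;q)_n=(x_1;q)_n\cdots(x_j;q)_n$ (also for $n=\infty$). *)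

theory Defs
  imports "HOL-Analysis.Analysis"
begin

definition qpoch :: "complex \<Rightarrow> complex \<Rightarrow> nat \<Rightarrow> complex" where
  "qpoch x q n = (\<Prod>i<n. 1 - x * q ^ i)"

definition qpoch_inf :: "complex \<Rightarrow> complex \<Rightarrow> complex" where
  "qpoch_inf x q = (\<Prod>i. 1 - x * q ^ i)"

end

theory Submission
  imports Defs
begin

lemma qpoch_0[simp]: "qpoch x q 0 = 1"
  by (simp add: qpoch_def)

lemma qpoch_Suc: "qpoch x q (Suc n) = qpoch x q n * (1 - x*q^n)"
  by (simp add: qpoch_def)

lemma qpoch_add: "qpoch x q (m+n) = qpoch x q m * qpoch (x*q^m) q n"
proof (induction n)
  case 0 then show ?case by simp
next
  case (Suc n) then show ?case by (simp add: qpoch_Suc power_add mult_ac)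
qed

lemma qpoch_Suc': "qpoch x q (Suc n) = (1 - x) * qpoch (x*q) q n"
  using qpoch_add[of x q 1 n] by (simp add: qpoch_def)

lemma qpoch_convergent_prod:
  fixes x q :: complex
  assumes "norm q < 1"
  shows "convergent_prod (\<lambda>i. 1 - x*q^i)"
proof -
  have "summable (\<lambda>i. norm x * norm q ^ i)"
    using assms by (intro summable_mult summable_geometric) auto
  moreover have "norm ((1 - x*q^i) - 1) = norm x * norm q ^ i" for i
    by (simp add: norm_mult norm_power norm_minus_commute)
  ultimately have "summable (\<lambda>i. norm ((1 - x*q^i) - 1))"
    by simp
  then show ?thesis
    by (intro abs_convergent_prod_imp_convergent_prod) (simp add: abs_convergent_prod_conv_summable)
qed

lemma qpoch_tendsto:
  assumes "norm q < 1"
  shows "(\<lambda>n. qpoch x q n) \<longlonglongrightarrow> qpoch_inf x q"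
proof -
  have "(\<lambda>n. \<Prod>i\<le>n. 1 - x*q^i) \<longlonglongrightarrow> qpoch_inf x q"
    unfolding qpoch_inf_def by (rule convergent_prod_LIMSEQ[OF qpoch_convergent_prod[OF assms]])
  then have "(\<lambda>n. qpoch x q (Suc n)) \<longlonglongrightarrow> qpoch_inf x q"
    by (simp add: qpoch_def lessThan_Suc_atMost)
  then show ?thesis by (rule LIMSEQ_imp_Suc)
qed

lemma qpoch_inf_split:
  assumes "norm q < 1"
  shows "qpoch_inf x q = qpoch x q n * qpoch_inf (x*q^n) q"
proof -
  have "(\<lambda>m. qpoch x q (n+m)) \<longlonglongrightarrow> qpoch_inf x q"
    using LIMSEQ_ignore_initial_segment[OF qpoch_tendsto[OF assms], of x n]
    by (simp add: add.commute)
  moreover have "(\<lambda>m. qpoch x q (n+m)) \<longlonglongrightarrow> qpoch x q n * qpoch_inf (x*q^n) q"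
    unfolding qpoch_add by (intro tendsto_mult tendsto_const qpoch_tendsto assms)
  ultimately show ?thesis using LIMSEQ_unique by blast
qed

lemma qpoch_inf_nonzero:
  assumes "norm q < 1" "\<And>n. qpoch x q n \<noteq> 0"
  shows "qpoch_inf x q \<noteq> 0"
proof -
  have "1 - x*q^i \<noteq> 0" for i
    using assms(2)[of "Suc i"] by (simp add: qpoch_Suc)
  then show ?thesis unfolding qpoch_inf_def
    by (intro prodinf_nonzero qpoch_convergent_prod assms)
qed

lemma qpoch_nonzero_small:
  assumes "norm q < 1" "norm x < 1"
  shows "qpoch x q n \<noteq> 0"
proof -
  have "1 - x*q^i \<noteq> 0" for i
  proof
    assume "1 - x*q^i = 0"
    then have "norm (x*q^i) = 1" by (metis norm_one right_minus_eq)
    moreover have "norm (x*q^i) < 1"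
    proof -
      have "norm q ^ i \<le> 1" using assms by (simp add: power_le_one)
      then have "norm x * norm q ^ i \<le> norm x" by (simp add: mult_left_le)
      then show ?thesis using assms by (simp add: norm_mult norm_power)
    qed
    ultimately show False by simp
  qed
  then show ?thesis by (simp add: qpoch_def)
qed

lemma norm_qpoch_le:
  assumes "norm q \<le> 1"
  shows "norm (qpoch x q n) \<le> (1 + norm x)^n"
proof -
  have "norm (1 - x*q^i) \<le> 1 + norm x" for i
  proof -
    have "norm (1 - x*q^i) \<le> 1 + norm (x*q^i)" by (metis norm_one norm_triangle_ineq4)
    also have "norm (x*q^i) \<le> norm x"
      using assms by (simp add: norm_mult norm_power mult_left_le power_le_one)
    finally show ?thesis by simp
  qed
  then have "norm (qpoch x q n) \<le> (\<Prod>i<n. 1 + norm x)"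
    unfolding qpoch_def prod_norm[symmetric] by (intro prod_mono) auto
  then show ?thesis by simp
qed

lemma norm_qpoch_ge:
  assumes "norm q \<le> 1" "norm x \<le> 1/2"
  shows "norm (qpoch x q n) \<ge> (1/2)^n"
proof -
  have "norm (1 - x*q^i) \<ge> 1/2" for i
  proof -
    have "norm (x*q^i) \<le> norm x"
      using assms by (simp add: norm_mult norm_power mult_left_le power_le_one)
    moreover have "1 - norm (x*q^i) \<le> norm (1 - x*q^i)"
      by (metis norm_one norm_triangle_ineq2)
    ultimately show ?thesis using assms by linarith
  qed
  then have "(\<Prod>i<n. (1/2::real)) \<le> norm (qpoch x q n)"
    unfolding qpoch_def prod_norm[symmetric] by (intro prod_mono) auto
  then show ?thesis by simp
qed

lemma seq_lower_bound:
  fixes X :: "nat \<Rightarrow> 'a::real_normed_vector"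
  assumes "X \<longlonglongrightarrow> L" "L \<noteq> 0" "\<And>n. X n \<noteq> 0"
  shows "\<exists>c>0. \<forall>n. norm (X n) \<ge> c"
proof -
  have "(\<lambda>n. norm (X n)) \<longlonglongrightarrow> norm L" using assms(1) by (rule tendsto_norm)
  moreover have "norm L / 2 < norm L" using assms(2) by simp
  ultimately have "eventually (\<lambda>n. norm (X n) > norm L / 2) sequentially"
    by (rule order_tendstoD)
  then obtain N where N: "\<And>n. n \<ge> N \<Longrightarrow> norm (X n) > norm L / 2"
    by (auto simp: eventually_sequentially)
  define c where "c = min (norm L / 2) (Min (insert 1 ((\<lambda>n. norm (X n)) ` {..<N})))"
  have "c > 0" unfolding c_def using assms by auto
  moreover have "norm (X n) \<ge> c" for n
  proof (cases "n \<ge> N")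
    case True then show ?thesis using N[of n] unfolding c_def by linarith
  next
    case False
    then have "Min (insert 1 ((\<lambda>n. norm (X n)) ` {..<N})) \<le> norm (X n)"
      by (intro Min_le) auto
    then show ?thesis unfolding c_def by linarith
  qed
  ultimately show ?thesis by blast
qed

lemma seq_upper_bound:
  fixes X :: "nat \<Rightarrow> 'a::real_normed_vector"
  assumes "X \<longlonglongrightarrow> L"
  shows "\<exists>B>0. \<forall>n. norm (X n) \<le> B"
  using convergent_imp_Bseq[OF convergentI[OF assms]] by (auto simp: Bseq_def)

lemma qpochqq_bounds:
  assumes "norm q < 1"
  shows "\<exists>c>0. \<forall>n. norm (qpoch q q n) \<ge> c" "\<exists>B>0. \<forall>n. norm (qpoch q q n) \<le> B"
proof -
  have nz: "qpoch q q n \<noteq> 0" for n using qpoch_nonzero_small assms by blast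
  show "\<exists>c>0. \<forall>n. norm (qpoch q q n) \<ge> c"
    by (rule seq_lower_bound[OF qpoch_tendsto[OF assms] qpoch_inf_nonzero[OF assms nz] nz])
  show "\<exists>B>0. \<forall>n. norm (qpoch q q n) \<le> B"
    by (rule seq_upper_bound[OF qpoch_tendsto[OF assms]])
qed

lemma vwp_poly:
  fixes A c d x q X :: complex
  assumes "c \<noteq> 0" "d \<noteq> 0"
  shows "(1-A*X^2)*(1-x)*(1-x*c*d*X)*(1-A*q*X/c)*(1-A*q*X/d)
        - (1-x*d)*(1-x*c)*(1-A*q/(c*d))*(1-A*q*X^2)*(1-A*X)*X
      = -(1-A*x*q*X)*(1-A*X)*(x - A*q/(c*d)*X)*(1-c*X)*(1-d*X)
        + (1-A*x*X)*(1-X)*(1-x*c*d*X)*(1-A*q*X/c)*(1-A*q*X/d)"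
  using assms by (simp add: field_simps) algebra

lemma frac_lemma:
  fixes a T U Y s W :: complex
  assumes "s \<noteq> 0" "W \<noteq> 0" "a*(s*W) - T = U + Y*W"
  shows "a - T/(s*W) = U/(s*W) + Y/s"
proof -
  have "a - T/(s*W) = (a*(s*W) - T)/(s*W)" using assms(1,2) by (simp add: field_simps)
  also have "\<dots> = (U + Y*W)/(s*W)" using assms(3) by simp
  also have "\<dots> = U/(s*W) + Y/s" using assms(1,2) by (simp add: field_simps)
  finally show ?thesis .
qed

lemma vwp_rat:
  fixes A b c d x q X :: complex
  assumes "c \<noteq> 0" "d \<noteq> 0" "b*x*c*d = A*q"
    and nz: "1-x \<noteq> 0" "1-x*c*d*X \<noteq> 0" "1-A*q/c*X \<noteq> 0" "1-A*q/d*X \<noteq> 0"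
  shows "(1-A*X^2) - (1-x*d)*(1-x*c)*(1-A*q/(c*d))*(1-A*q*X^2)*(1-A*X)*X
            / ((1-x)*((1-x*c*d*X)*(1-A*q/c*X)*(1-A*q/d*X)))
     = -(1-A*x*q*X)*(1-A*X)*((1-b*X)*x)*(1-c*X)*(1-d*X)
            / ((1-x)*((1-x*c*d*X)*(1-A*q/c*X)*(1-A*q/d*X)))
       + (1-A*x*X)*(1-X)/(1-x)"
proof -
  have bx: "(1-b*X)*x = x - A*q/(c*d)*X"
    using assms(1,2,3) by (simp add: field_simps)
  have e1: "1-A*q/c*X = 1-A*q*X/c" "1-A*q/d*X = 1-A*q*X/d" by simp_all
  have W: "(1-x*c*d*X)*(1-A*q/c*X)*(1-A*q/d*X) \<noteq> 0" using nz by simp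
  have P: "(1-A*X^2)*((1-x)*((1-x*c*d*X)*(1-A*q/c*X)*(1-A*q/d*X)))
        - (1-x*d)*(1-x*c)*(1-A*q/(c*d))*(1-A*q*X^2)*(1-A*X)*X
      = -(1-A*x*q*X)*(1-A*X)*((1-b*X)*x)*(1-c*X)*(1-d*X)
        + (1-A*x*X)*(1-X)*((1-x*c*d*X)*(1-A*q/c*X)*(1-A*q/d*X))"
    unfolding bx e1 using vwp_poly[OF assms(1,2), where A=A and x=x and q=q and X=X] by (simp add: mult_ac)
  show ?thesis by (rule frac_lemma[OF nz(1) W P])
qed

definition vv :: "complex \<Rightarrow> complex \<Rightarrow> complex \<Rightarrow> complex \<Rightarrow> complex \<Rightarrow> complex \<Rightarrow> complex \<Rightarrow> nat \<Rightarrow> complex" where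
  "vv q A b c d u x n = qpoch A q n * qpoch b q n * qpoch c q n * qpoch d q n
     / (qpoch q q n * qpoch u q n * qpoch (A*q/c) q n * qpoch (A*q/d) q n) * x^n"

definition tt :: "complex \<Rightarrow> complex \<Rightarrow> complex \<Rightarrow> complex \<Rightarrow> complex \<Rightarrow> complex \<Rightarrow> complex \<Rightarrow> nat \<Rightarrow> complex" where
  "tt q A b c d u x n = (1 - A*q^(2*n)) * vv q A b c d u x n"

definition GG :: "complex \<Rightarrow> complex \<Rightarrow> complex \<Rightarrow> complex \<Rightarrow> complex \<Rightarrow> complex \<Rightarrow> complex \<Rightarrow> nat \<Rightarrow> complex" where
  "GG q A b c d u x n = -((1 - A*x*q^n)*(1-q^n)/(1-x)) * vv q A b c d u x n"

lemma qpoch_shift_div: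
  assumes "qpoch z q (Suc n) \<noteq> 0"
  shows "qpoch (z*q) q n = qpoch z q n * (1 - z*q^n) / (1 - z)"
    "1 - z \<noteq> 0" "qpoch z q n \<noteq> 0" "1 - z*q^n \<noteq> 0"
proof -
  have a: "qpoch z q n * (1 - z*q^n) = (1 - z) * qpoch (z*q) q n"
    using qpoch_Suc[of z q n] qpoch_Suc'[of z q n] by simp
  show "1 - z \<noteq> 0" using assms qpoch_Suc'[of z q n] by auto
  then show "qpoch (z*q) q n = qpoch z q n * (1 - z*q^n) / (1 - z)"
    using a by (simp add: field_simps)
  show "qpoch z q n \<noteq> 0" "1 - z*q^n \<noteq> 0" using assms qpoch_Suc[of z q n] by auto
qed

lemma vv_shift:
  assumes "A \<noteq> 1" and nz: "qpoch u q (Suc n) \<noteq> 0" "qpoch (A*q/c) q (Suc n) \<noteq> 0"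
      "qpoch (A*q/d) q (Suc n) \<noteq> 0"
  shows "vv q (A*q) b c d (u*q) (x*q) n = vv q A b c d u x n *
     ((1-A*q^n)/(1-A) * ((1-u)/(1-u*q^n)) * ((1-A*q/c)/(1-A*q/c*q^n)) * ((1-A*q/d)/(1-A*q/d*q^n)) * q^n)"
proof -
  have e: "A*q*q/c = (A*q/c)*q" "A*q*q/d = (A*q/d)*q" by simp_all
  have A1: "1 - A \<noteq> 0" using assms(1) by simp
  note su = qpoch_shift_div[OF nz(1)] and sc = qpoch_shift_div[OF nz(2)] and sd = qpoch_shift_div[OF nz(3)]
  have sA: "qpoch (A*q) q n = qpoch A q n * (1 - A*q^n) / (1 - A)"
    using qpoch_Suc[of A q n] qpoch_Suc'[of A q n] A1 by (simp add: field_simps)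
  show ?thesis unfolding vv_def e sA su(1) sc(1) sd(1)
    by (simp add: power_mult_distrib divide_inverse inverse_mult_distrib ac_simps)
qed

lemma vv_Suc:
  "vv q A b c d u x (Suc n) = vv q A b c d u x n *
     ((1-A*q^n)*(1-b*q^n)*(1-c*q^n)*(1-d*q^n) / ((1-q*q^n)*(1-u*q^n)*(1-A*q/c*q^n)*(1-A*q/d*q^n)) * x)"
  unfolding vv_def qpoch_Suc
  by (simp add: divide_inverse inverse_mult_distrib ac_simps)

lemma absL2:
  fixes a1 b1 g1 d1 r1 P T W0 N E1 E2 E3 X :: complex
  assumes "a1 \<noteq> 0" "b1 \<noteq> 0" "g1 \<noteq> 0" "d1 \<noteq> 0"
  shows "a1*(P/(b1*g1*d1*r1)) * (T * (W0 * (N/a1 * (b1/E1) * (g1/E2) * (d1/E3) * X)))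
       = W0 * (P*T*N*X/(r1*(E1*E2*E3)))"
  using assms by (simp add: field_simps)

lemma absL3:
  fixes r1 K Q W0 N1 N2 N3 N4 x E1 E2 E3 :: complex
  assumes "Q \<noteq> 0"
  shows "-(K*Q/r1) * (W0 * (N1*N2*N3*N4/(Q*E1*E2*E3)*x)) = W0*(-K*N1*(N2*x)*N3*N4/(r1*(E1*E2*E3)))"
  using assms by (simp add: field_simps)

lemma tt_step:
  fixes q A b c d u x :: complex
  assumes "c \<noteq> 0" "d \<noteq> 0" "u = x*c*d" "b*x*c*d = A*q" "1-x \<noteq> 0"
    and nz: "qpoch q q (Suc n) \<noteq> 0" "qpoch u q (Suc n) \<noteq> 0" "qpoch (A*q/c) q (Suc n) \<noteq> 0"
      "qpoch (A*q/d) q (Suc n) \<noteq> 0"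
  shows "tt q A b c d u x n
      - (1-A)*((1-u/c)*(1-u/d)*(1-A*q/(c*d))/((1-u)*(1-A*q/c)*(1-A*q/d)*(1-x)))
         * tt q (A*q) b c d (u*q) (x*q) n
     = GG q A b c d u x (Suc n) - GG q A b c d u x n"
proof (cases "A = 1")
  case True
  have z: "qpoch 1 q (Suc m) = 0" for m by (simp add: qpoch_Suc')
  have "vv q 1 b c d u x (Suc n) = 0" unfolding vv_def z by simp
  moreover have "tt q 1 b c d u x n = 0 \<and> GG q 1 b c d u x n = 0"
    by (cases n) (simp_all add: tt_def GG_def vv_def z)
  ultimately show ?thesis using True by (simp add: GG_def)
next
  case False
  define X where "X = q^n"
  define W0 where "W0 = vv q A b c d u x n"
  note su = qpoch_shift_div[OF nz(2)] and sc = qpoch_shift_div[OF nz(3)]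
    and sd = qpoch_shift_div[OF nz(4)] and sq = qpoch_shift_div[OF nz(1)]
  have A1: "1 - A \<noteq> 0" using False by simp
  have q2: "q^(2*n) = X^2" unfolding X_def by (simp add: power_mult[symmetric] mult.commute)
  have T1: "tt q A b c d u x n = W0 * (1 - A*X^2)"
    unfolding tt_def W0_def q2 by simp
  have T2: "(1-A)*((1-u/c)*(1-u/d)*(1-A*q/(c*d))/((1-u)*(1-A*q/c)*(1-A*q/d)*(1-x)))
         * tt q (A*q) b c d (u*q) (x*q) n
      = W0 * ((1-x*d)*(1-x*c)*(1-A*q/(c*d))*(1-A*q*X^2)*(1-A*X)*X
            / ((1-x)*((1-x*c*d*X)*(1-A*q/c*X)*(1-A*q/d*X))))"
  proof -
    have "tt q (A*q) b c d (u*q) (x*q) n = (1-A*q*X^2) * (W0 *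
     ((1-A*X)/(1-A) * ((1-u)/(1-u*X)) * ((1-A*q/c)/(1-A*q/c*X)) * ((1-A*q/d)/(1-A*q/d*X)) * X))"
      unfolding tt_def vv_shift[OF False nz(2-4)] q2 W0_def X_def by (simp add: mult.assoc)
    moreover have "u/c = x*d" "u/d = x*c" using assms(1-3) by simp_all
    ultimately show ?thesis
      using absL2[OF A1 su(2) sc(2) sd(2), of "(1-u/c)*(1-u/d)*(1-A*q/(c*d))" "1-x"
          "1-A*q*X^2" W0 "1-A*X" "1-u*X" "1-A*q/c*X" "1-A*q/d*X" X] assms(3)
      by (simp add: mult_ac)
  qed
  have G1: "GG q A b c d u x (Suc n) = W0 * (-(1-A*x*q*X)*(1-A*X)*((1-b*X)*x)*(1-c*X)*(1-d*X)
            / ((1-x)*((1-x*c*d*X)*(1-A*q/c*X)*(1-A*q/d*X))))"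
  proof -
    have "GG q A b c d u x (Suc n) = -((1-A*x*q*X)*(1-q*X)/(1-x)) * (W0 *
       ((1-A*X)*(1-b*X)*(1-c*X)*(1-d*X) / ((1-q*X)*(1-x*c*d*X)*(1-A*q/c*X)*(1-A*q/d*X)) * x))"
      unfolding GG_def vv_Suc W0_def X_def assms(3) by (simp add: mult_ac)
    also have "\<dots> = W0 * (-(1-A*x*q*X)*(1-A*X)*((1-b*X)*x)*(1-c*X)*(1-d*X)
            / ((1-x)*((1-x*c*d*X)*(1-A*q/c*X)*(1-A*q/d*X))))"
      using assms(3) by (intro absL3) (use sq(4) in \<open>simp add: X_def\<close>)
    finally show ?thesis .
  qed
  have G0: "GG q A b c d u x n = - (W0 * ((1-A*x*X)*(1-X)/(1-x)))"
    unfolding GG_def W0_def X_def by simp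
  have nzX: "1-x*c*d*X \<noteq> 0" "1-A*q/c*X \<noteq> 0" "1-A*q/d*X \<noteq> 0"
    using su(4) sc(4) sd(4) assms(3) unfolding X_def by auto
  have R: "(1-A*X^2) - (1-x*d)*(1-x*c)*(1-A*q/(c*d))*(1-A*q*X^2)*(1-A*X)*X
            / ((1-x)*((1-x*c*d*X)*(1-A*q/c*X)*(1-A*q/d*X)))
     = -(1-A*x*q*X)*(1-A*X)*((1-b*X)*x)*(1-c*X)*(1-d*X)
            / ((1-x)*((1-x*c*d*X)*(1-A*q/c*X)*(1-A*q/d*X)))
       + (1-A*x*X)*(1-X)/(1-x)"
    by (rule vwp_rat[OF assms(1,2,4,5) nzX])
  show ?thesis unfolding T1 T2 G1 G0
    using arg_cong[OF R, of "\<lambda>z. W0 * z"] by (simp add: algebra_simps)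
qed

lemma ratio_summable:
  fixes f r :: "nat \<Rightarrow> complex"
  assumes "\<And>n. f (Suc n) = f n * r n" "r \<longlonglongrightarrow> L" "norm L < 1"
  shows "summable (\<lambda>n. norm (f n))"
proof -
  define c where "c = (1 + norm L)/2"
  have c: "c < 1" "norm L < c" using assms(3) by (auto simp: c_def)
  have "eventually (\<lambda>n. norm (r n) < c) sequentially"
    using order_tendstoD(2)[OF tendsto_norm[OF assms(2)] c(2)] .
  then obtain N where N: "\<And>n. n \<ge> N \<Longrightarrow> norm (r n) < c" by (auto simp: eventually_sequentially)
  show ?thesis
  proof (rule summable_ratio_test[OF c(1)])
    fix n assume "n \<ge> N"
    then have "norm (f n) * norm (r n) \<le> norm (f n) * c"
      using N[of n] by (intro mult_left_mono) auto
    then show "norm (norm (f (Suc n))) \<le> c * norm (norm (f n))"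
      by (simp add: assms(1) norm_mult mult.commute)
  qed
qed

lemma vv_summable:
  assumes "norm q < 1" "norm x < 1"
  shows "summable (\<lambda>n. norm (vv q A b c d u x n))"
proof -
  have X: "(\<lambda>n. q^n) \<longlonglongrightarrow> 0" using assms(1) by (rule LIMSEQ_power_zero)
  have "(\<lambda>n. (1-A*q^n)*(1-b*q^n)*(1-c*q^n)*(1-d*q^n) / ((1-q*q^n)*(1-u*q^n)*(1-A*q/c*q^n)*(1-A*q/d*q^n)) * x)
     \<longlonglongrightarrow> (1-A*0)*(1-b*0)*(1-c*0)*(1-d*0) / ((1-q*0)*(1-u*0)*(1-A*q/c*0)*(1-A*q/d*0)) * x"
    by (intro tendsto_intros X) simp
  then have lim: "(\<lambda>n. (1-A*q^n)*(1-b*q^n)*(1-c*q^n)*(1-d*q^n) / ((1-q*q^n)*(1-u*q^n)*(1-A*q/c*q^n)*(1-A*q/d*q^n)) * x)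
     \<longlonglongrightarrow> x" by simp
  show ?thesis
    by (rule ratio_summable[where f="vv q A b c d u x", OF vv_Suc lim assms(2)])
qed

lemma norm_one_minus_le:
  fixes A q :: complex
  assumes "norm q \<le> 1"
  shows "norm (1 - A*q^k) \<le> 1 + norm A"
proof -
  have "norm (1 - A*q^k) \<le> 1 + norm (A*q^k)" by (metis norm_one norm_triangle_ineq4)
  also have "norm (A*q^k) \<le> norm A"
    using assms by (simp add: norm_mult norm_power mult_left_le power_le_one)
  finally show ?thesis by simp
qed

lemma tt_summable:
  assumes "norm q < 1" "norm x < 1"
  shows "summable (\<lambda>n. norm (tt q A b c d u x n))"
proof (rule summable_comparison_test'[OF summable_mult[OF vv_summable[OF assms]], of 0])
  fix n :: nat
  have "norm (tt q A b c d u x n) = norm (1 - A*q^(2*n)) * norm (vv q A b c d u x n)"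
    by (simp add: tt_def norm_mult)
  also have "\<dots> \<le> (1 + norm A) * norm (vv q A b c d u x n)"
    using norm_one_minus_le[of q A "2*n"] assms by (intro mult_right_mono) auto
  finally show "norm (norm (tt q A b c d u x n)) \<le> (1 + norm A) * norm (vv q A b c d u x n)" by simp
qed

lemma GG_tendsto:
  assumes "norm q < 1" "norm x < 1"
  shows "GG q A b c d u x \<longlonglongrightarrow> 0"
proof -
  have v: "vv q A b c d u x \<longlonglongrightarrow> 0"
    using summable_LIMSEQ_zero[OF summable_norm_cancel[OF vv_summable[OF assms]]] .
  have X: "(\<lambda>n. q^n) \<longlonglongrightarrow> 0" using assms(1) by (rule LIMSEQ_power_zero)
  have "GG q A b c d u x \<longlonglongrightarrow> -((1 - A*x*0)*(1-0)/(1-x)) * 0"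
    unfolding GG_def[abs_def] using assms by (intro tendsto_intros X v) auto
  then show ?thesis by simp
qed

definition SS :: "complex \<Rightarrow> complex \<Rightarrow> complex \<Rightarrow> complex \<Rightarrow> complex \<Rightarrow> complex \<Rightarrow> complex \<Rightarrow> complex" where
  "SS q A b c d u x = suminf (tt q A b c d u x)"

lemma SS_step:
  assumes "norm q < 1" "norm x < 1" "c \<noteq> 0" "d \<noteq> 0" "u = x*c*d" "b*x*c*d = A*q"
    and nz: "\<And>n. qpoch u q n \<noteq> 0" "\<And>n. qpoch (A*q/c) q n \<noteq> 0" "\<And>n. qpoch (A*q/d) q n \<noteq> 0"
  shows "SS q A b c d u x = (1-A)*((1-u/c)*(1-u/d)*(1-A*q/(c*d))/((1-u)*(1-A*q/c)*(1-A*q/d)*(1-x)))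
         * SS q (A*q) b c d (u*q) (x*q)"
proof -
  define R where "R = (1-A)*((1-u/c)*(1-u/d)*(1-A*q/(c*d))/((1-u)*(1-A*q/c)*(1-A*q/d)*(1-x)))"
  have x1: "1 - x \<noteq> 0" using assms(2) by auto
  have xq: "norm (x*q) < 1" using assms(1,2)
    by (simp add: norm_mult) (metis mult_less_cancel_left1 mult_strict_mono' norm_ge_zero mult_1_right)
  have qq: "qpoch q q n \<noteq> 0" for n using qpoch_nonzero_small[OF assms(1) assms(1)] .
  have st: "tt q A b c d u x n - R * tt q (A*q) b c d (u*q) (x*q) n
       = GG q A b c d u x (Suc n) - GG q A b c d u x n" for n
    unfolding R_def by (rule tt_step[OF assms(3-6) x1 qq nz])
  have "(\<lambda>n. GG q A b c d u x (Suc n) - GG q A b c d u x n) sums (0 - GG q A b c d u x 0)"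
    by (rule telescope_sums[OF GG_tendsto[OF assms(1,2)]])
  then have s1: "(\<lambda>n. tt q A b c d u x n - R * tt q (A*q) b c d (u*q) (x*q) n) sums 0"
    unfolding st by (simp add: GG_def)
  have s2: "(\<lambda>n. tt q A b c d u x n - R * tt q (A*q) b c d (u*q) (x*q) n) sums
      (SS q A b c d u x - R * SS q (A*q) b c d (u*q) (x*q))"
    unfolding SS_def
    by (intro sums_diff sums_mult summable_sums summable_norm_cancel[OF tt_summable] assms(1,2) xq)
  show ?thesis using sums_unique2[OF s1 s2] unfolding R_def by simp
qed

definition Pfin :: "complex \<Rightarrow> complex \<Rightarrow> complex \<Rightarrow> complex \<Rightarrow> complex \<Rightarrow> complex \<Rightarrow> nat \<Rightarrow> complex" where
  "Pfin q A c d u x N = qpoch A q N * qpoch (u/c) q N * qpoch (u/d) q N * qpoch (A*q/(c*d)) q N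
     / (qpoch u q N * qpoch (A*q/c) q N * qpoch (A*q/d) q N * qpoch x q N)"

lemma Pfin_Suc:
  "Pfin q A c d u x (Suc N) = Pfin q A c d u x N *
    ((1-A*q^N)*((1-u*q^N/c)*(1-u*q^N/d)*(1-A*q^N*q/(c*d))
      /((1-u*q^N)*(1-A*q^N*q/c)*(1-A*q^N*q/d)*(1-x*q^N))))"
  unfolding Pfin_def qpoch_Suc
  by (simp add: divide_inverse inverse_mult_distrib ac_simps)

lemma norm_less_one_mult:
  fixes x q :: complex
  assumes "norm q < 1" "norm x < 1"
  shows "norm (x*q^N) < 1"
proof -
  have "norm q ^ N \<le> 1" using assms(1) by (simp add: power_le_one)
  then have "norm x * norm q ^ N \<le> norm x" by (simp add: mult_left_le)
  then show ?thesis using assms(2) by (simp add: norm_mult norm_power)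
qed

lemma qpoch_nz_shift:
  assumes "\<And>n. qpoch z q n \<noteq> 0"
  shows "qpoch (z*q^N) q n \<noteq> 0"
  using assms[of "N+n"] unfolding qpoch_add by simp

lemma SS_iter:
  assumes "norm q < 1" "norm x < 1" "c \<noteq> 0" "d \<noteq> 0" "u = x*c*d" "b*x*c*d = A*q"
    and nz: "\<And>n. qpoch u q n \<noteq> 0" "\<And>n. qpoch (A*q/c) q n \<noteq> 0" "\<And>n. qpoch (A*q/d) q n \<noteq> 0"
  shows "SS q A b c d u x = Pfin q A c d u x N * SS q (A*q^N) b c d (u*q^N) (x*q^N)"
proof (induction N)
  case 0 then show ?case by (simp add: Pfin_def)
next
  case (Suc N)
  have e1: "A*q^N*q/c = (A*q/c)*q^N" "A*q^N*q/d = (A*q/d)*q^N" by simp_all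
  have st: "SS q (A*q^N) b c d (u*q^N) (x*q^N) =
      (1-A*q^N)*((1-u*q^N/c)*(1-u*q^N/d)*(1-A*q^N*q/(c*d))
      /((1-u*q^N)*(1-A*q^N*q/c)*(1-A*q^N*q/d)*(1-x*q^N)))
      * SS q (A*q^N*q) b c d (u*q^N*q) (x*q^N*q)"
  proof (rule SS_step[OF assms(1) norm_less_one_mult[OF assms(1,2)] assms(3,4)])
    show "u*q^N = x*q^N*c*d" using assms(5) by simp
    show "b*(x*q^N)*c*d = A*q^N*q" using assms(6)
      by (metis mult.assoc mult.commute mult.left_commute)
    show "qpoch (u*q^N) q n \<noteq> 0" for n by (rule qpoch_nz_shift[OF nz(1)])
    show "qpoch (A*q^N*q/c) q n \<noteq> 0" for n unfolding e1 by (rule qpoch_nz_shift[OF nz(2)])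
    show "qpoch (A*q^N*q/d) q n \<noteq> 0" for n unfolding e1 by (rule qpoch_nz_shift[OF nz(3)])
  qed
  have e2: "A*q^N*q = A*q^Suc N" "u*q^N*q = u*q^Suc N" "x*q^N*q = x*q^Suc N"
    by (simp_all add: mult_ac)
  show ?case using Suc.IH unfolding Pfin_Suc st e2 by (simp add: mult_ac)
qed

lemma Pfin_tendsto:
  assumes "norm q < 1" "norm x < 1"
    and nz: "\<And>n. qpoch u q n \<noteq> 0" "\<And>n. qpoch (A*q/c) q n \<noteq> 0" "\<And>n. qpoch (A*q/d) q n \<noteq> 0"
  shows "Pfin q A c d u x \<longlonglongrightarrow> qpoch_inf A q * qpoch_inf (u/c) q * qpoch_inf (u/d) q * qpoch_inf (A*q/(c*d)) q
     / (qpoch_inf u q * qpoch_inf (A*q/c) q * qpoch_inf (A*q/d) q * qpoch_inf x q)"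
proof -
  have "qpoch_inf x q \<noteq> 0" using qpoch_inf_nonzero[OF assms(1) qpoch_nonzero_small[OF assms(1,2)]] .
  moreover have "qpoch_inf u q \<noteq> 0" "qpoch_inf (A*q/c) q \<noteq> 0" "qpoch_inf (A*q/d) q \<noteq> 0"
    using qpoch_inf_nonzero[OF assms(1)] nz by auto
  ultimately show ?thesis unfolding Pfin_def[abs_def]
    by (intro tendsto_intros qpoch_tendsto assms(1)) auto
qed

lemma norm_qpoch_ge':
  assumes "norm q \<le> 1" "norm x \<le> r" "r \<le> 1"
  shows "norm (qpoch x q n) \<ge> (1 - r)^n"
proof -
  have "norm (1 - x*q^i) \<ge> 1 - r" for i
  proof -
    have "norm (x*q^i) \<le> norm x"
      using assms by (simp add: norm_mult norm_power mult_left_le power_le_one)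
    moreover have "1 - norm (x*q^i) \<le> norm (1 - x*q^i)"
      by (metis norm_one norm_triangle_ineq2)
    ultimately show ?thesis using assms by linarith
  qed
  then have "(\<Prod>i<n. 1 - r) \<le> norm (qpoch x q n)"
    unfolding qpoch_def prod_norm[symmetric] using assms(3) by (intro prod_mono) auto
  then show ?thesis by simp
qed

lemma vv_bound:
  assumes "norm q < 1" "norm A' \<le> a0" "norm u' \<le> 1/2" "norm (A'*q/c) \<le> 1/2" "norm (A'*q/d) \<le> 1/2"
  shows "norm (vv q A' b c d u' x' k) \<le>
     ((1+a0)*(1+norm b)*(1+norm c)*(1+norm d) * 8 / (1 - norm q) * norm x')^k"
proof -
  define N0 where "N0 = (1+a0)*(1+norm b)*(1+norm c)*(1+norm d)"
  define D0 where "D0 = (1 - norm q) * (1/2) * (1/2) * (1/2)"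
  have a0: "a0 \<ge> 0" using assms(2) norm_ge_zero order_trans by blast
  have q1: "norm q \<le> 1" using assms(1) by simp
  have num: "norm (qpoch A' q k * qpoch b q k * qpoch c q k * qpoch d q k) \<le> N0^k"
  proof -
    have "norm (qpoch A' q k) \<le> (1+a0)^k"
    proof -
      have "(1 + norm A')^k \<le> (1+a0)^k" using assms(2) by (intro power_mono) auto
      then show ?thesis using norm_qpoch_le[OF q1, of A' k] by linarith
    qed
    moreover note norm_qpoch_le[OF q1, of b k] norm_qpoch_le[OF q1, of c k] norm_qpoch_le[OF q1, of d k]
    ultimately have "norm (qpoch A' q k) * norm (qpoch b q k) * norm (qpoch c q k) * norm (qpoch d q k)
       \<le> (1+a0)^k * (1+norm b)^k * (1+norm c)^k * (1+norm d)^k"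
      by (intro mult_mono) (auto simp: a0)
    then show ?thesis by (simp add: norm_mult N0_def power_mult_distrib)
  qed
  have den: "norm (qpoch q q k * qpoch u' q k * qpoch (A'*q/c) q k * qpoch (A'*q/d) q k) \<ge> D0^k"
  proof -
    have "(1 - norm q)^k * (1-1/2)^k * (1-1/2)^k * (1-1/2)^k
       \<le> norm (qpoch q q k) * norm (qpoch u' q k) * norm (qpoch (A'*q/c) q k) * norm (qpoch (A'*q/d) q k)"
      using norm_qpoch_ge'[OF q1, of q "norm q" k] norm_qpoch_ge'[OF q1 assms(3)]
        norm_qpoch_ge'[OF q1 assms(4)] norm_qpoch_ge'[OF q1 assms(5)] assms(1)
      by (intro mult_mono) auto
    moreover have "D0^k = (1 - norm q)^k * (1-1/2)^k * (1-1/2)^k * (1-1/2)^k"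
      unfolding D0_def by (simp only: power_mult_distrib) simp
    ultimately show ?thesis by (simp add: norm_mult)
  qed
  have D0: "D0 > 0" using assms(1) by (simp add: D0_def)
  have "norm (vv q A' b c d u' x' k) =
     norm (qpoch A' q k * qpoch b q k * qpoch c q k * qpoch d q k)
      / norm (qpoch q q k * qpoch u' q k * qpoch (A'*q/c) q k * qpoch (A'*q/d) q k) * norm x' ^ k"
    by (simp add: vv_def norm_mult norm_divide norm_power)
  also have "\<dots> \<le> N0^k / D0^k * norm x' ^ k"
  proof -
    have "N0 \<ge> 0" unfolding N0_def using a0 by simp
    then show ?thesis using num den D0 by (intro mult_right_mono frac_le) auto
  qed
  also have "\<dots> = (N0 / D0 * norm x')^k" by (simp add: power_mult_distrib power_divide)
  also have "N0 / D0 = (1+a0)*(1+norm b)*(1+norm c)*(1+norm d) * 8 / (1 - norm q)"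
    by (simp add: N0_def D0_def field_simps)
  finally show ?thesis .
qed

lemma ev_small:
  fixes f :: "nat \<Rightarrow> complex"
  assumes "f \<longlonglongrightarrow> 0"
  shows "eventually (\<lambda>N. norm (f N) \<le> 1/2) sequentially"
proof -
  have "eventually (\<lambda>N. norm (f N) < 1/2) sequentially"
    using order_tendstoD(2)[OF tendsto_norm_zero[OF assms], of "1/2"] by simp
  then show ?thesis by (rule eventually_mono) simp
qed

lemma SS_shift_tendsto:
  assumes "norm q < 1" "norm x < 1"
  shows "(\<lambda>N. SS q (A*q^N) b c d (u*q^N) (x*q^N)) \<longlonglongrightarrow> 1"
proof -
  define K where "K = (1+norm A)*(1+norm b)*(1+norm c)*(1+norm d) * 8 / (1 - norm q)"
  define \<rho> where "\<rho> N = K * norm x * norm q ^ N" for N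
  have K0: "K \<ge> 0" using assms(1) by (simp add: K_def)
  have qN: "(\<lambda>N. q^N) \<longlonglongrightarrow> 0" using assms(1) by (rule LIMSEQ_power_zero)
  have rq: "(\<lambda>N. norm q ^ N) \<longlonglongrightarrow> 0" using assms(1) by (intro LIMSEQ_power_zero) simp
  have \<rho>0: "\<rho> \<longlonglongrightarrow> 0" unfolding \<rho>_def[abs_def] using tendsto_mult_left[OF rq, of "K * norm x"] by simp
  have ev: "eventually (\<lambda>N. norm (u*q^N) \<le> 1/2 \<and> norm (A*q^N*q/c) \<le> 1/2 \<and> norm (A*q^N*q/d) \<le> 1/2
        \<and> norm (of_real (\<rho> N) :: complex) \<le> 1/2) sequentially"
  proof (intro eventually_conj)
    show "eventually (\<lambda>N. norm (u*q^N) \<le> 1/2) sequentially"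
      by (rule ev_small) (use tendsto_mult_left[OF qN, of u] in simp)
    show "eventually (\<lambda>N. norm (A*q^N*q/c) \<le> 1/2) sequentially"
      by (rule ev_small) (intro tendsto_divide_zero tendsto_mult_right_zero tendsto_mult_left_zero qN)
    show "eventually (\<lambda>N. norm (A*q^N*q/d) \<le> 1/2) sequentially"
      by (rule ev_small) (intro tendsto_divide_zero tendsto_mult_right_zero tendsto_mult_left_zero qN)
    show "eventually (\<lambda>N. norm (of_real (\<rho> N) :: complex) \<le> 1/2) sequentially"
      by (rule ev_small) (use tendsto_of_real[OF \<rho>0] in \<open>simp\<close>)
  qed
  define g where "g N = norm A * norm q ^ N + (1 + norm A) * (\<rho> N / (1 - \<rho> N))" for N
  have g: "g \<longlonglongrightarrow> 0"
  proof -
    have "g \<longlonglongrightarrow> norm A * 0 + (1 + norm A) * (0 / (1 - 0))"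
      unfolding g_def[abs_def] by (intro tendsto_intros rq \<rho>0) simp
    then show ?thesis by simp
  qed
  have bound: "norm (SS q (A*q^N) b c d (u*q^N) (x*q^N) - 1) \<le> g N"
    if h: "norm (u*q^N) \<le> 1/2" "norm (A*q^N*q/c) \<le> 1/2" "norm (A*q^N*q/d) \<le> 1/2"
          "norm (of_real (\<rho> N) :: complex) \<le> 1/2" for N
  proof -
    define f where "f = tt q (A*q^N) b c d (u*q^N) (x*q^N)"
    have r0: "0 \<le> \<rho> N" using K0 by (simp add: \<rho>_def)
    have rN: "0 \<le> \<rho> N" "\<rho> N \<le> 1/2" using h(4) r0 unfolding norm_of_real by auto
    have xN: "norm (x*q^N) < 1" by (rule norm_less_one_mult[OF assms])
    have sf: "summable f" unfolding f_def by (rule summable_norm_cancel[OF tt_summable[OF assms(1) xN]])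
    have AN: "norm (A*q^N) \<le> norm A"
      using assms(1) by (simp add: norm_mult norm_power mult_left_le power_le_one)
    have fb: "norm (f (Suc k)) \<le> (1 + norm A) * \<rho> N ^ Suc k" for k
    proof -
      have "norm (f (Suc k)) = norm (1 - A*q^N*q^(2*Suc k)) * norm (vv q (A*q^N) b c d (u*q^N) (x*q^N) (Suc k))"
        by (simp add: f_def tt_def norm_mult)
      also have "\<dots> \<le> (1 + norm A) * (K * norm (x*q^N))^Suc k"
      proof (rule mult_mono)
        show "norm (1 - A*q^N*q^(2*Suc k)) \<le> 1 + norm A"
          using norm_one_minus_le[of q "A*q^N" "2*Suc k"] AN assms(1) by simp
        show "norm (vv q (A*q^N) b c d (u*q^N) (x*q^N) (Suc k)) \<le> (K * norm (x*q^N))^Suc k"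
          unfolding K_def by (rule vv_bound[OF assms(1) AN h(1-3)])
      qed auto
      also have "K * norm (x*q^N) = \<rho> N" by (simp add: \<rho>_def norm_mult norm_power)
      finally show ?thesis .
    qed
    have geo: "summable (\<lambda>k. (1 + norm A) * \<rho> N ^ Suc k)"
      using rN by (intro summable_mult summable_mult2 summable_geometric) auto
    have "(\<Sum>k. (1 + norm A) * \<rho> N ^ Suc k) = (1 + norm A) * (\<rho> N / (1 - \<rho> N))"
    proof -
      have "(\<Sum>k. \<rho> N ^ Suc k) = \<rho> N * (\<Sum>k. \<rho> N ^ k)"
        using rN by (simp add: suminf_mult summable_geometric)
      also have "\<dots> = \<rho> N / (1 - \<rho> N)" using rN by (simp add: suminf_geometric)
      finally show ?thesis using rN by (subst suminf_mult) (auto intro!: summable_mult2 summable_geometric)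
    qed
    moreover have "norm (\<Sum>k. f (Suc k)) \<le> (\<Sum>k. (1 + norm A) * \<rho> N ^ Suc k)"
    proof -
      have s1: "summable (\<lambda>k. norm (f (Suc k)))"
        by (rule summable_comparison_test'[OF geo, of 0]) (use fb in simp)
      have "norm (\<Sum>k. f (Suc k)) \<le> (\<Sum>k. norm (f (Suc k)))" by (rule summable_norm[OF s1])
      also have "\<dots> \<le> (\<Sum>k. (1 + norm A) * \<rho> N ^ Suc k)" by (rule suminf_le[OF fb s1 geo])
      finally show ?thesis .
    qed
    moreover have "SS q (A*q^N) b c d (u*q^N) (x*q^N) - 1 = - (A*q^N) + (\<Sum>k. f (Suc k))"
      using suminf_split_head[OF sf] unfolding SS_def f_def[symmetric]
      by (simp add: f_def tt_def vv_def)
    ultimately have "norm (SS q (A*q^N) b c d (u*q^N) (x*q^N) - 1) \<le> norm (A*q^N) + (1 + norm A) * (\<rho> N / (1 - \<rho> N))"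
      using norm_triangle_ineq[of "- (A*q^N)" "\<Sum>k. f (Suc k)"] by simp
    then show ?thesis by (simp add: g_def norm_mult norm_power)
  qed
  have "(\<lambda>N. SS q (A*q^N) b c d (u*q^N) (x*q^N) - 1) \<longlonglongrightarrow> 0"
  proof (rule Lim_null_comparison[OF _ g])
    show "eventually (\<lambda>N. norm (SS q (A*q^N) b c d (u*q^N) (x*q^N) - 1) \<le> g N) sequentially"
      using ev by eventually_elim (rule bound; simp)
  qed
  then have "(\<lambda>N. (SS q (A*q^N) b c d (u*q^N) (x*q^N) - 1) + 1) \<longlonglongrightarrow> 0 + 1"
    by (intro tendsto_add tendsto_const)
  then show ?thesis by simp
qed

theorem vwp_sums:
  assumes "norm q < 1" "norm x < 1" "c \<noteq> 0" "d \<noteq> 0" "u = x*c*d" "b*x*c*d = A*q"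
    and nz: "\<And>n. qpoch u q n \<noteq> 0" "\<And>n. qpoch (A*q/c) q n \<noteq> 0" "\<And>n. qpoch (A*q/d) q n \<noteq> 0"
  shows "tt q A b c d u x sums (qpoch_inf A q * qpoch_inf (u/c) q * qpoch_inf (u/d) q * qpoch_inf (A*q/(c*d)) q
     / (qpoch_inf u q * qpoch_inf (A*q/c) q * qpoch_inf (A*q/d) q * qpoch_inf x q))"
proof -
  define P where "P = qpoch_inf A q * qpoch_inf (u/c) q * qpoch_inf (u/d) q * qpoch_inf (A*q/(c*d)) q
     / (qpoch_inf u q * qpoch_inf (A*q/c) q * qpoch_inf (A*q/d) q * qpoch_inf x q)"
  have l1: "Pfin q A c d u x \<longlonglongrightarrow> P"
    unfolding P_def by (rule Pfin_tendsto[OF assms(1,2) nz])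
  have l2: "(\<lambda>N. SS q (A*q^N) b c d (u*q^N) (x*q^N)) \<longlonglongrightarrow> 1"
    by (rule SS_shift_tendsto[OF assms(1,2)])
  have l3: "(\<lambda>N. Pfin q A c d u x N * SS q (A*q^N) b c d (u*q^N) (x*q^N)) \<longlonglongrightarrow> P * 1"
    by (rule tendsto_mult[OF l1 l2])
  have e: "Pfin q A c d u x N * SS q (A*q^N) b c d (u*q^N) (x*q^N) = SS q A b c d u x" for N
    by (rule SS_iter[OF assms, symmetric])
  have "(\<lambda>N. SS q A b c d u x) \<longlonglongrightarrow> P" using l3 unfolding e by simp
  then have SP: "SS q A b c d u x = P" using LIMSEQ_const_iff by blast
  have "tt q A b c d u x sums SS q A b c d u x"
    unfolding SS_def by (intro summable_sums summable_norm_cancel[OF tt_summable] assms)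
  then show ?thesis unfolding SP P_def .
qed

definition dd :: "complex \<Rightarrow> complex \<Rightarrow> nat \<Rightarrow> complex" where
  "dd q w n = q^(n*n) * w^n / (qpoch q q n * qpoch (w*q) q n)"

lemma absD:
  fixes a b W w P Q c1 c2 :: complex
  shows "a*b*(W*w)/((P*c1)*(Q*c2)) = a*W/(P*Q)*(b*w/(c1*c2))"
  by (simp add: divide_inverse inverse_mult_distrib ac_simps)

lemma dd_Suc: "dd q w (Suc n) = dd q w n * (q^(2*n+1) * w / ((1 - q*q^n) * (1 - w*q*q^n)))"
proof -
  have "Suc n * Suc n = n*n + (2*n+1)" by simp
  then have e: "q^(Suc n * Suc n) = q^(n*n) * q^(2*n+1)" by (simp only: power_add)
  have "dd q w (Suc n) = q^(n*n) * q^(2*n+1) * (w^n*w) / ((qpoch q q n * (1 - q*q^n)) * (qpoch (w*q) q n * (1 - w*q*q^n)))"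
    unfolding dd_def e qpoch_Suc power_Suc2 ..
  then show ?thesis unfolding absD dd_def .
qed

lemma absE:
  fixes a b c D N e :: complex
  assumes "a \<noteq> 0"
  shows "-(c*a)*(D*(N/(a*b))) - (-(c*e)*D) = D*c*(e - N/b)"
  using assms by (simp add: field_simps)

lemma dd_summable:
  assumes "norm q < 1"
  shows "summable (\<lambda>n. norm (dd q w n))"
proof -
  have X: "(\<lambda>n. q^n) \<longlonglongrightarrow> 0" using assms(1) by (rule LIMSEQ_power_zero)
  have "(\<lambda>n. q^(2*n+1) * w / ((1 - q*q^n) * (1 - w*q*q^n))) = (\<lambda>n. (q^n)^2 * q * w / ((1 - q*q^n) * (1 - w*q*q^n)))"
    by (simp add: power_mult[symmetric] power_add mult.commute)
  moreover have "(\<lambda>n. (q^n)^2 * q * w / ((1 - q*q^n) * (1 - w*q*q^n))) \<longlonglongrightarrow> 0^2*q*w/((1-q*0)*(1-w*q*0))"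
    by (intro tendsto_intros X) simp
  ultimately have lim: "(\<lambda>n. q^(2*n+1) * w / ((1 - q*q^n) * (1 - w*q*q^n))) \<longlonglongrightarrow> 0" by simp
  show ?thesis by (rule ratio_summable[where f="dd q w", OF dd_Suc lim]) simp
qed

lemma dd_step:
  assumes nz: "qpoch q q (Suc n) \<noteq> 0" "qpoch (w*q) q (Suc n) \<noteq> 0"
  shows "(1 - w*q) * dd q w n - dd q (w*q) n
     = -((1-w*q)*(1-q^Suc n)) * dd q w (Suc n) - (-((1-w*q)*(1-q^n)) * dd q w n)"
proof -
  define X where "X = q^n"
  define D where "D = dd q w n"
  note sw = qpoch_shift_div[OF nz(2)] and sq = qpoch_shift_div[OF nz(1)]
  have e1: "dd q (w*q) n = D * ((1 - w*q) / (1 - w*q*X) * X)"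
  proof -
    have "dd q (w*q) n = q^(n*n) * (w*q)^n / (qpoch q q n * (qpoch (w*q) q n * (1 - w*q*q^n) / (1 - w*q)))"
      unfolding dd_def sw(1)[symmetric] by (simp add: mult.assoc)
    then show ?thesis unfolding D_def dd_def X_def
      by (simp add: divide_inverse inverse_mult_distrib ac_simps power_mult_distrib)
  qed
  have e2: "dd q w (Suc n) = D * (q*X^2*w / ((1 - q*X) * (1 - w*q*X)))"
    unfolding dd_Suc D_def X_def by (simp add: power_mult[symmetric] power_add mult.commute)
  have a: "1 - q*X \<noteq> 0" "1 - w*q*X \<noteq> 0" using sq(4) sw(4) unfolding X_def by (simp_all add: mult_ac)
  have key: "1 - X/(1-w*q*X) = (1-X) - q*X^2*w/(1-w*q*X)"
    using a(2) by (simp add: field_simps) (simp add: algebra_simps power2_eq_square)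
  have r1: "(1-w*q)*D - D*((1-w*q)/(1-w*q*X)*X) = D*(1-w*q)*(1 - X/(1-w*q*X))"
    by (simp add: algebra_simps)
  have r2: "-((1-w*q)*(1-q*X)) * (D * (q*X^2*w / ((1 - q*X) * (1 - w*q*X)))) - (-((1-w*q)*(1-X)) * D)
      = D*(1-w*q)*((1-X) - q*X^2*w/(1-w*q*X))"
    by (rule absE[OF a(1)])
  have "(1 - w*q) * D - D * ((1 - w*q) / (1 - w*q*X) * X)
      = -((1-w*q)*(1-q*X)) * (D * (q*X^2*w / ((1 - q*X) * (1 - w*q*X)))) - (-((1-w*q)*(1-X)) * D)"
    unfolding r1 r2 key ..
  then show ?thesis unfolding e1 e2 D_def[symmetric] by (simp add: X_def)
qed

definition DD :: "complex \<Rightarrow> complex \<Rightarrow> complex" where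
  "DD q w = suminf (dd q w)"

lemma DD_step:
  assumes "norm q < 1" "\<And>n. qpoch (w*q) q n \<noteq> 0"
  shows "(1 - w*q) * DD q w = DD q (w*q)"
proof -
  have qq: "qpoch q q n \<noteq> 0" for n using qpoch_nonzero_small[OF assms(1) assms(1)] .
  define h where "h n = -((1-w*q)*(1-q^n)) * dd q w n" for n
  have v: "dd q w \<longlonglongrightarrow> 0"
    using summable_LIMSEQ_zero[OF summable_norm_cancel[OF dd_summable[OF assms(1)]]] .
  have X: "(\<lambda>n. q^n) \<longlonglongrightarrow> 0" using assms(1) by (rule LIMSEQ_power_zero)
  have "h \<longlonglongrightarrow> -((1-w*q)*(1-0)) * 0" unfolding h_def[abs_def] by (intro tendsto_intros X v)
  then have "(\<lambda>n. h (Suc n) - h n) sums (0 - h 0)" using telescope_sums by force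
  then have s1: "(\<lambda>n. (1 - w*q) * dd q w n - dd q (w*q) n) sums 0"
    unfolding h_def dd_step[OF qq assms(2), symmetric] by simp
  have s2: "(\<lambda>n. (1 - w*q) * dd q w n - dd q (w*q) n) sums ((1 - w*q) * DD q w - DD q (w*q))"
    unfolding DD_def
    by (intro sums_diff sums_mult summable_sums summable_norm_cancel[OF dd_summable] assms(1))
  show ?thesis using sums_unique2[OF s1 s2] by simp
qed

lemma DD_iter:
  assumes "norm q < 1" "\<And>n. qpoch (w*q) q n \<noteq> 0"
  shows "qpoch (w*q) q N * DD q w = DD q (w*q^N)"
proof (induction N)
  case 0 then show ?case by simp
next
  case (Suc N)
  have "(1 - w*q^N*q) * DD q (w*q^N) = DD q (w*q^N*q)"
  proof (rule DD_step[OF assms(1)])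
    show "qpoch (w*q^N*q) q n \<noteq> 0" for n
      using qpoch_nz_shift[OF assms(2), of N n] by (simp add: mult_ac)
  qed
  then have st: "DD q (w*q^N) * (1 - w*q*q^N) = DD q (w*q^Suc N)" by (simp add: mult_ac)
  have "qpoch (w*q) q (Suc N) * DD q w = (qpoch (w*q) q N * DD q w) * (1 - w*q*q^N)"
    by (simp add: qpoch_Suc mult_ac)
  also have "\<dots> = DD q (w*q^N) * (1 - w*q*q^N)" by (simp add: Suc.IH)
  finally show ?case using st by simp
qed

lemma dd_bound:
  assumes "norm q < 1" "norm (w*q) \<le> 1/2"
  shows "norm (dd q w k) \<le> (2 * norm w / (1 - norm q))^k"
proof -
  have q1: "norm q \<le> 1" using assms(1) by simp
  have den: "norm (qpoch q q k * qpoch (w*q) q k) \<ge> ((1 - norm q)*(1/2))^k"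
  proof -
    have "(1 - norm q)^k * (1-1/2)^k \<le> norm (qpoch q q k) * norm (qpoch (w*q) q k)"
      using norm_qpoch_ge'[OF q1, of q "norm q" k] norm_qpoch_ge'[OF q1 assms(2)] assms(1)
      by (intro mult_mono) auto
    moreover have "((1 - norm q)*(1/2))^k = (1 - norm q)^k * (1-1/2)^k"
      by (simp only: power_mult_distrib) simp
    ultimately show ?thesis by (simp add: norm_mult)
  qed
  have num: "norm (q^(k*k) * w^k) \<le> norm w ^ k"
  proof -
    have "norm q ^ (k*k) * norm w ^ k \<le> 1 * norm w ^ k"
      by (intro mult_right_mono power_le_one) (use assms in auto)
    then show ?thesis by (simp add: norm_mult norm_power)
  qed
  have D0: "((1 - norm q)*(1/2))^k > 0" using assms(1) by simp
  have "norm (dd q w k) = norm (q^(k*k) * w^k) / norm (qpoch q q k * qpoch (w*q) q k)"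
    by (simp add: dd_def norm_divide)
  also have "\<dots> \<le> norm w ^ k / ((1 - norm q)*(1/2))^k"
    using num den D0 by (intro frac_le) auto
  also have "\<dots> = (2 * norm w / (1 - norm q))^k" by (simp add: power_divide field_simps)
  finally show ?thesis .
qed

lemma DD_shift_tendsto:
  assumes "norm q < 1"
  shows "(\<lambda>N. DD q (w*q^N)) \<longlonglongrightarrow> 1"
proof -
  define \<rho> where "\<rho> N = 2 * norm w * norm q ^ N / (1 - norm q)" for N
  have rq: "(\<lambda>N. norm q ^ N) \<longlonglongrightarrow> 0" using assms(1) by (intro LIMSEQ_power_zero) simp
  have \<rho>0: "\<rho> \<longlonglongrightarrow> 0" unfolding \<rho>_def[abs_def]
    using tendsto_divide[OF tendsto_mult_left[OF rq, of "2 * norm w"] tendsto_const[of "1 - norm q"]] assms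
    by simp
  have qN: "(\<lambda>N. q^N) \<longlonglongrightarrow> 0" using assms(1) by (rule LIMSEQ_power_zero)
  have ev: "eventually (\<lambda>N. norm (w*q^N*q) \<le> 1/2 \<and> norm (of_real (\<rho> N) :: complex) \<le> 1/2) sequentially"
  proof (intro eventually_conj)
    show "eventually (\<lambda>N. norm (w*q^N*q) \<le> 1/2) sequentially"
      by (rule ev_small) (intro tendsto_mult_right_zero tendsto_mult_left_zero qN)
    show "eventually (\<lambda>N. norm (of_real (\<rho> N) :: complex) \<le> 1/2) sequentially"
      by (rule ev_small) (use tendsto_of_real[OF \<rho>0] in \<open>simp\<close>)
  qed
  define g where "g N = \<rho> N / (1 - \<rho> N)" for N
  have g: "g \<longlonglongrightarrow> 0"
  proof -
    have "g \<longlonglongrightarrow> 0 / (1 - 0)" unfolding g_def[abs_def] by (intro tendsto_intros \<rho>0) simp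
    then show ?thesis by simp
  qed
  have bound: "norm (DD q (w*q^N) - 1) \<le> g N"
    if h: "norm (w*q^N*q) \<le> 1/2" "norm (of_real (\<rho> N) :: complex) \<le> 1/2" for N
  proof -
    define f where "f = dd q (w*q^N)"
    have r0: "0 \<le> \<rho> N" using assms by (simp add: \<rho>_def)
    have rN: "\<rho> N \<le> 1/2" using h(2) r0 unfolding norm_of_real by auto
    have sf: "summable f" unfolding f_def by (rule summable_norm_cancel[OF dd_summable[OF assms(1)]])
    have fb: "norm (f (Suc k)) \<le> \<rho> N ^ Suc k" for k
    proof -
      have "norm (f (Suc k)) \<le> (2 * norm (w*q^N) / (1 - norm q))^Suc k"
        unfolding f_def by (rule dd_bound[OF assms(1) h(1)])
      also have "2 * norm (w*q^N) / (1 - norm q) = \<rho> N" by (simp add: \<rho>_def norm_mult norm_power)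
      finally show ?thesis .
    qed
    have "summable (\<lambda>k. \<rho> N ^ k)" by (rule summable_geometric) (use r0 rN in simp)
    then have geo: "summable (\<lambda>k. \<rho> N ^ Suc k)"
      using summable_Suc_iff[of "\<lambda>k. \<rho> N ^ k"] by simp
    have gs: "(\<Sum>k. \<rho> N ^ Suc k) = \<rho> N / (1 - \<rho> N)"
    proof -
      have "(\<Sum>k. \<rho> N ^ Suc k) = (\<Sum>k. \<rho> N * \<rho> N ^ k)" by simp
      also have "\<dots> = \<rho> N * (\<Sum>k. \<rho> N ^ k)"
        using r0 rN by (intro suminf_mult summable_geometric) auto
      also have "\<dots> = \<rho> N / (1 - \<rho> N)" using r0 rN by (simp add: suminf_geometric)
      finally show ?thesis .
    qed
    have tl: "norm (\<Sum>k. f (Suc k)) \<le> (\<Sum>k. \<rho> N ^ Suc k)"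
    proof -
      have s1: "summable (\<lambda>k. norm (f (Suc k)))"
        by (rule summable_comparison_test'[OF geo, of 0]) (use fb in simp)
      have "norm (\<Sum>k. f (Suc k)) \<le> (\<Sum>k. norm (f (Suc k)))" by (rule summable_norm[OF s1])
      also have "\<dots> \<le> (\<Sum>k. \<rho> N ^ Suc k)" by (rule suminf_le[OF fb s1 geo])
      finally show ?thesis .
    qed
    have "DD q (w*q^N) - 1 = (\<Sum>k. f (Suc k))"
      using suminf_split_head[OF sf] unfolding DD_def f_def[symmetric]
      by (simp add: f_def dd_def)
    then show ?thesis using tl gs by (simp add: g_def)
  qed
  have "(\<lambda>N. DD q (w*q^N) - 1) \<longlonglongrightarrow> 0"
  proof (rule Lim_null_comparison[OF _ g])
    show "eventually (\<lambda>N. norm (DD q (w*q^N) - 1) \<le> g N) sequentially"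
      using ev by eventually_elim (rule bound; simp)
  qed
  then have "(\<lambda>N. (DD q (w*q^N) - 1) + 1) \<longlonglongrightarrow> 0 + 1"
    by (intro tendsto_add tendsto_const)
  then show ?thesis by simp
qed

theorem durfee_sums:
  assumes "norm q < 1" "\<And>n. qpoch (w*q) q n \<noteq> 0"
  shows "dd q w sums (1 / qpoch_inf (w*q) q)"
proof -
  have nz: "qpoch_inf (w*q) q \<noteq> 0" by (rule qpoch_inf_nonzero[OF assms])
  have l: "(\<lambda>N. qpoch (w*q) q N * DD q w) \<longlonglongrightarrow> qpoch_inf (w*q) q * DD q w"
    by (intro tendsto_mult qpoch_tendsto tendsto_const assms(1))
  have "(\<lambda>N. qpoch (w*q) q N * DD q w) \<longlonglongrightarrow> 1"
    unfolding DD_iter[OF assms] by (rule DD_shift_tendsto[OF assms(1)])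
  then have "qpoch_inf (w*q) q * DD q w = 1" using l LIMSEQ_unique by blast
  then have "DD q w = 1 / qpoch_inf (w*q) q" using nz by (simp add: field_simps)
  moreover have "dd q w sums DD q w"
    unfolding DD_def by (intro summable_sums summable_norm_cancel[OF dd_summable] assms(1))
  ultimately show ?thesis by simp
qed

fun pent :: "nat \<Rightarrow> nat" where
  "pent 0 = 0" | "pent (Suc r) = pent r + 3*r + 1"

definition alpha :: "complex \<Rightarrow> nat \<Rightarrow> complex" where
  "alpha q r = (if r = 0 then 1 else (1 + q^r) * (-1)^r * q^(pent r))"

definition bff :: "complex \<Rightarrow> nat \<Rightarrow> nat \<Rightarrow> complex" where
  "bff q n r = qpoch q q n * alpha q r / (qpoch q q (n-r) * qpoch q q (n+r))"

definition bgg :: "complex \<Rightarrow> nat \<Rightarrow> nat \<Rightarrow> complex" where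
  "bgg q n r = (if r = 0 then 0 else
     (-1)^(r+1) * q^(n+1-r+pent r) * qpoch q q n / (qpoch q q (n+1-r) * qpoch q q (n+r)))"

lemma absB0:
  fixes P1 P2 P3 Y Z q eps Q a b :: complex
  assumes "P2 \<noteq> 0" "P3 \<noteq> 0" "a \<noteq> 0" "b \<noteq> 0"
    and key: "(1+Y)*((1-q*Z*Y) - a*b) = Z*Y^3*q*a + Z*q*b"
  shows "P1*(1-q*Z*Y)*((1+Y)*eps*Q)/((P2*a)*(P3*b)) - P1*((1+Y)*eps*Q)/(P2*P3)
       = eps*(Z*Q*Y^3*q)*P1/(P2*(P3*b)) - (-eps)*(Z*q*Q)*P1/((P2*a)*P3)"
proof -
  have L: "P1*(1-q*Z*Y)*((1+Y)*eps*Q)/((P2*a)*(P3*b)) - P1*((1+Y)*eps*Q)/(P2*P3)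
      = P1*eps*Q*((1+Y)*((1-q*Z*Y) - a*b))/(P2*P3*a*b)"
    using assms(1-4) by (simp add: field_simps)
  have R: "eps*(Z*Q*Y^3*q)*P1/(P2*(P3*b)) - (-eps)*(Z*q*Q)*P1/((P2*a)*P3)
      = P1*eps*Q*(Z*Y^3*q*a + Z*q*b)/(P2*P3*a*b)"
    using assms(1-4) by (simp add: field_simps)
  show ?thesis unfolding L R key ..
qed

lemma absB:
  fixes P1 P2 P3 Y Z q eps Q :: complex
  assumes "P2 \<noteq> 0" "P3 \<noteq> 0" "1 - q*Z \<noteq> 0" "1 - q*Z*Y^2 \<noteq> 0"
  shows "P1*(1-q*Z*Y)*((1+Y)*eps*Q)/((P2*(1-q*Z))*(P3*(1-q*Z*Y^2))) - P1*((1+Y)*eps*Q)/(P2*P3)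
       = eps*(Z*Q*Y^3*q)*P1/(P2*(P3*(1-q*Z*Y^2))) - (-eps)*(Z*q*Q)*P1/((P2*(1-q*Z))*P3)"
proof (rule absB0[OF assms])
  show "(1+Y)*((1-q*Z*Y) - (1-q*Z)*(1-q*Z*Y^2)) = Z*Y^3*q*(1-q*Z) + Z*q*(1-q*Z*Y^2)"
    by (simp add: algebra_simps power2_eq_square power3_eq_cube)
qed

lemma bailey_step_mid:
  assumes qq: "\<And>k. qpoch q q k \<noteq> 0" and r: "r \<ge> 1"
  shows "bff q (m+r+1) r - bff q (m+r) r = bgg q (m+r) (Suc r) - bgg q (m+r) r"
proof -
  define P1 P2 P3 Y Z Q eps where "P1 = qpoch q q (m+r)" and "P2 = qpoch q q m" and "P3 = qpoch q q (m+2*r)"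
    and "Y = q^r" and "Z = q^m" and "Q = q^pent r" and "eps = ((-1)^r :: complex)"
  have a: "alpha q r = (1+Y)*eps*Q" using r by (simp add: alpha_def Y_def eps_def Q_def)
  have e1: "qpoch q q (m+r+1) = P1*(1-q*Z*Y)"
    unfolding P1_def Z_def Y_def by (simp add: qpoch_Suc power_add mult_ac)
  have e2: "qpoch q q (m+r+1-r) = P2*(1-q*Z)"
    using r unfolding P2_def Z_def by (simp add: qpoch_Suc Suc_diff_le mult_ac)
  have e4: "qpoch q q (m+r-r) = P2" "qpoch q q (m+r+r) = P3" unfolding P2_def P3_def
    by (simp_all add: mult_2 add.assoc)
  have e5: "qpoch q q (m + r + 1 - Suc r) = P2" "qpoch q q (m + r + Suc r) = P3*(1-q*Z*Y^2)"
  proof -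
    show "qpoch q q (m + r + 1 - Suc r) = P2" unfolding P2_def by simp
    have "m + r + Suc r = Suc (m+2*r)" by simp
    then show "qpoch q q (m + r + Suc r) = P3*(1-q*Z*Y^2)" unfolding P3_def Z_def Y_def
      by (simp add: qpoch_Suc power_add power_mult mult_ac mult_2 mult_2_right add.assoc power2_eq_square)
  qed
  have e3: "qpoch q q (m+r+1+r) = P3*(1-q*Z*Y^2)"
  proof -
    have "m+r+1+r = m + r + Suc r" by simp
    then show ?thesis using e5(2) by (simp only:)
  qed
  have e6: "qpoch q q (m + r + 1 - r) = P2*(1-q*Z)" using e2 by simp
  have g1: "bgg q (m+r) (Suc r) = eps*(Z*Q*Y^3*q)*P1/(P2*(P3*(1-q*Z*Y^2)))"
  proof -
    have "m + r + 1 - Suc r + pent (Suc r) = m + pent r + 3*r + 1" by simp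
    then have "q^(m + r + 1 - Suc r + pent (Suc r)) = Z*Q*Y^3*q"
      unfolding Z_def Q_def Y_def by (simp add: power_add power_mult[symmetric] mult_ac)
    moreover have "(-1::complex)^(Suc r + 1) = eps" by (simp add: eps_def)
    ultimately show ?thesis unfolding bgg_def using e5 by (simp add: P1_def)
  qed
  have g0: "bgg q (m+r) r = (-eps)*(Z*q*Q)*P1/((P2*(1-q*Z))*P3)"
  proof -
    have "m + r + 1 - r + pent r = m + 1 + pent r" by simp
    then have "q^(m + r + 1 - r + pent r) = Z*q*Q" unfolding Z_def Q_def by (simp add: power_add)
    moreover have "(-1::complex)^(r + 1) = -eps" by (simp add: eps_def)
    ultimately show ?thesis unfolding bgg_def using r e6 e4 by (simp add: P1_def)
  qed
  have f1: "bff q (m+r+1) r = P1*(1-q*Z*Y)*((1+Y)*eps*Q)/((P2*(1-q*Z))*(P3*(1-q*Z*Y^2)))"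
    unfolding bff_def a e1 e6 e3 ..
  have f0: "bff q (m+r) r = P1*((1+Y)*eps*Q)/(P2*P3)"
    unfolding bff_def a e4 P1_def ..
  have nz: "P2 \<noteq> 0" "P3 \<noteq> 0" "1 - q*Z \<noteq> 0" "1 - q*Z*Y^2 \<noteq> 0"
    using qq[of m] qq[of "m+2*r"] qq[of "Suc m"] qq[of "Suc (m+2*r)"]
    unfolding P2_def P3_def Z_def Y_def
    by (auto simp: qpoch_Suc power_add power_mult mult_ac)
  show ?thesis unfolding f1 f0 g1 g0 by (rule absB[OF nz])
qed

lemma bailey_step0:
  assumes qq: "\<And>k. qpoch q q k \<noteq> 0"
  shows "bff q (n+1) 0 - bff q n 0 = bgg q n (Suc 0) - bgg q n 0"
proof -
  have a: "bff q k 0 = 1 / qpoch q q k" for k using qq[of k] by (simp add: bff_def alpha_def)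
  have b: "bgg q n (Suc 0) = q^(n+1) / qpoch q q (n+1)" using qq[of n] by (simp add: bgg_def)
  have "1 / qpoch q q (n+1) - 1 / qpoch q q n = q^(n+1) / qpoch q q (n+1)"
    using qq[of n] qq[of "n+1"] by (simp add: qpoch_Suc field_simps)
  then show ?thesis unfolding a b by (simp add: bgg_def)
qed

lemma bailey_step_end:
  assumes qq: "\<And>k. qpoch q q k \<noteq> 0"
  shows "bff q (n+1) (n+1) = - bgg q n (Suc n)"
proof -
  define X Pn P Q eps where "X = q^n" and "Pn = qpoch q q n" and "P = qpoch q q (2*n+1)"
    and "Q = q^pent (Suc n)" and "eps = ((-1)^(Suc n) :: complex)"
  have e1: "qpoch q q (n+1) = Pn*(1-q*X)" by (simp add: Pn_def X_def qpoch_Suc)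
  have e2: "qpoch q q (n+1+(n+1)) = P*((1-q*X)*(1+q*X))"
  proof -
    have "n+1+(n+1) = Suc (2*n+1)" by simp
    moreover have "1 - q*q^(2*n+1) = (1-q*X)*(1+q*X)"
      unfolding X_def by (simp add: algebra_simps power2_eq_square power_add mult_2 mult_2_right)
    ultimately show ?thesis unfolding P_def by (simp only: qpoch_Suc)
  qed
  have nz: "(1-q*X)*(1+q*X) \<noteq> 0" using qq[of "n+1+(n+1)"] e2 by auto
  have al: "alpha q (n+1) = (1+q*X)*eps*Q" by (simp add: alpha_def X_def eps_def Q_def)
  have f: "bff q (n+1) (n+1) = Pn*(1-q*X)*((1+q*X)*eps*Q)/(1*(P*((1-q*X)*(1+q*X))))"
    unfolding bff_def al e1 e2 by simp
  have g: "bgg q n (Suc n) = (-eps)*Q*Pn/(1*P)"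
  proof -
    have "n+1+(Suc n) = Suc n + Suc n" by simp
    have "n + Suc n = 2*n+1" by simp
    then show ?thesis unfolding bgg_def by (simp add: eps_def Q_def Pn_def P_def mult_2)
  qed
  have "Pn*(1-q*X)*((1+q*X)*eps*Q)/(1*(P*((1-q*X)*(1+q*X)))) = - ((-eps)*Q*Pn/(1*P))"
    using nz by (cases "P = 0") (simp_all add: field_simps)
  then show ?thesis unfolding f g .
qed

lemma sum_telescope_atMost:
  fixes g :: "nat \<Rightarrow> complex"
  shows "(\<Sum>r\<le>n. g (Suc r) - g r) = g (Suc n) - g 0"
  by (induction n) simp_all

lemma bailey_sum:
  assumes qq: "\<And>k. qpoch q q k \<noteq> 0"
  shows "(\<Sum>r\<le>n. bff q n r) = 1"
proof (induction n)
  case 0 then show ?case using qq[of 0] by (simp add: bff_def alpha_def)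
next
  case (Suc n)
  have st: "bff q (n+1) r = bff q n r + (bgg q n (Suc r) - bgg q n r)" if "r \<le> n" for r
  proof (cases "r = 0")
    case True then show ?thesis using bailey_step0[OF qq, of n] by (simp add: algebra_simps)
  next
    case False
    then have r: "r \<ge> 1" by simp
    obtain m where m: "n = m + r" using \<open>r \<le> n\<close> le_Suc_ex by (metis add.commute)
    show ?thesis using bailey_step_mid[OF qq r, of m] unfolding m by (simp add: algebra_simps)
  qed
  have "(\<Sum>r\<le>Suc n. bff q (Suc n) r) = (\<Sum>r\<le>n. bff q (n+1) r) + bff q (n+1) (n+1)"
    by simp
  also have "(\<Sum>r\<le>n. bff q (n+1) r) = (\<Sum>r\<le>n. bff q n r) + (\<Sum>r\<le>n. bgg q n (Suc r) - bgg q n r)"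
    using st by (simp add: sum.distrib)
  also have "\<dots> = 1 + (bgg q n (Suc n) - bgg q n 0)"
    unfolding Suc.IH sum_telescope_atMost ..
  finally show ?case using bailey_step_end[OF qq, of n] by (simp add: bgg_def)
qed

theorem bailey_pair:
  assumes qq: "\<And>k. qpoch q q k \<noteq> 0"
  shows "(\<Sum>r\<le>n. alpha q r / (qpoch q q (n-r) * qpoch q q (n+r))) = 1 / qpoch q q n"
proof -
  have "qpoch q q n * (\<Sum>r\<le>n. alpha q r / (qpoch q q (n-r) * qpoch q q (n+r))) = 1"
    using bailey_sum[OF qq, of n] by (simp add: bff_def sum_distrib_left mult_ac times_divide_eq_right)
  then show ?thesis using qq[of n] by (simp add: field_simps)
qed

fun tri :: "nat \<Rightarrow> nat" where
  "tri 0 = 0" | "tri (Suc k) = tri k + k"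

lemma tri_closed: "2 * tri k = k * (k - 1)"
  by (induction k) (auto simp: algebra_simps)

definition qbin :: "complex \<Rightarrow> nat \<Rightarrow> nat \<Rightarrow> complex" where
  "qbin p N k = (if k \<le> N then qpoch p p N / (qpoch p p k * qpoch p p (N-k)) else 0)"

lemma qbin_0[simp]: "qbin p N 0 = 1" if "qpoch p p N \<noteq> 0"
  using that by (simp add: qbin_def)

lemma absP:
  fixes M a b Y K :: complex
  assumes "a \<noteq> 0" "b \<noteq> 0" "1 - Y \<noteq> 0" "1 - K \<noteq> 0"
  shows "M*(1 - Y*K)/(a*(1-K)*(b*(1-Y))) = M/(a*(1-K)*b) + Y*(M/(a*(b*(1-Y))))"
proof -
  define u1 w1 where "u1 = 1 - Y" and "w1 = 1 - K"
  have "M/(a*w1*b) + Y*(M/(a*(b*u1))) = M*(u1 + Y*w1)/(a*w1*(b*u1))"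
  proof -
    have nz: "u1 \<noteq> 0" "w1 \<noteq> 0" using assms by (simp_all add: u1_def w1_def)
    then show ?thesis using assms(1,2) by (simp add: field_simps)
  qed
  moreover have "u1 + Y*w1 = 1 - Y*K" by (simp add: u1_def w1_def algebra_simps)
  ultimately show ?thesis by (simp add: u1_def w1_def)
qed

lemma qbin_pascal:
  assumes pp: "\<And>j. qpoch p p j \<noteq> 0" and k: "k \<ge> 1"
  shows "qbin p (Suc N) k = qbin p N k + p^(Suc N - k) * qbin p N (k - 1)"
proof -
  consider "k \<le> N" | "k = Suc N" | "k > Suc N" by linarith
  then show ?thesis
  proof cases
    case 1
    define j where "j = N - k"
    have N: "N = k + j" using 1 by (simp add: j_def)
    obtain k' where k': "k = Suc k'" using k by (cases k) auto
    have e1: "qpoch p p (Suc N) = qpoch p p N * (1 - p^(N+1))" by (simp add: qpoch_Suc mult.commute)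
    have e2: "qpoch p p (Suc N - k) = qpoch p p j * (1 - p^(j+1))"
      unfolding N by (simp add: qpoch_Suc k' mult.commute)
    have e3: "qpoch p p k = qpoch p p k' * (1 - p^k)" by (simp add: k' qpoch_Suc mult.commute)
    have e4: "N - (k - 1) = Suc j" using N k' by simp
    have nz: "qpoch p p k' \<noteq> 0" "qpoch p p j \<noteq> 0" "1 - p^(j+1) \<noteq> 0" "1 - p^k \<noteq> 0"
      using pp[of k'] pp[of j] pp[of "Suc j"] pp[of k] e3
      by (auto simp: qpoch_Suc mult.commute)
    have pw: "p^(N+1) = p^(j+1) * p^k" unfolding N by (simp add: power_add mult_ac)
    have pwN: "p^N = p^j * p^k" unfolding N by (simp add: power_add mult_ac)
    have "qbin p (Suc N) k = qpoch p p N * (1 - p^(j+1)*p^k) / (qpoch p p k' * (1 - p^k) * (qpoch p p j * (1 - p^(j+1))))"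
      using 1 by (simp add: qbin_def e1 e2 e3 pw pwN)
    moreover have "qbin p N k = qpoch p p N / (qpoch p p k' * (1 - p^k) * qpoch p p j)"
      using 1 by (simp add: qbin_def e3 j_def)
    moreover have "qbin p N (k-1) = qpoch p p N / (qpoch p p k' * (qpoch p p j * (1 - p^(j+1))))"
    proof -
      have "k - 1 = k'" "N - k' = Suc j" using N k' by simp_all
      then show ?thesis using 1 by (simp add: qbin_def qpoch_Suc mult.commute)
    qed
    moreover have "Suc N - k = j + 1" using N by simp
    ultimately show ?thesis using absP[OF nz] by simp
  next
    case 2
    then show ?thesis using pp[of N] pp[of "Suc N"] by (simp add: qbin_def)
  next
    case 3
    then show ?thesis by (simp add: qbin_def)
  qed
qed

lemma qbinomial:
  assumes pp: "\<And>j. qpoch p p j \<noteq> 0"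
  shows "qpoch x p N = (\<Sum>k\<le>N. qbin p N k * (-1)^k * p^(tri k) * x^k)"
proof (induction N)
  case 0 then show ?case using pp[of 0] by simp
next
  case (Suc N)
  define c where "c k = qbin p N k * (-1)^k * p^(tri k)" for k
  have "(\<Sum>k\<le>Suc N. qbin p (Suc N) k * (-1)^k * p^(tri k) * x^k)
     = 1 + (\<Sum>k\<le>N. qbin p (Suc N) (Suc k) * (-1)^(Suc k) * p^(tri (Suc k)) * x^(Suc k))"
    unfolding sum.atMost_Suc_shift[of _ N] using pp[of "Suc N"] by simp
  also have "(\<Sum>k\<le>N. qbin p (Suc N) (Suc k) * (-1)^(Suc k) * p^(tri (Suc k)) * x^(Suc k))
     = (\<Sum>k\<le>N. qbin p N (Suc k) * (-1)^(Suc k) * p^(tri (Suc k)) * x^(Suc k))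
       - p^N * x * (\<Sum>k\<le>N. c k * x^k)"
  proof -
    have "qbin p (Suc N) (Suc k) * (-1)^(Suc k) * p^(tri (Suc k)) * x^(Suc k)
        = qbin p N (Suc k) * (-1)^(Suc k) * p^(tri (Suc k)) * x^(Suc k) - p^N * x * (c k * x^k)"
      if "k \<le> N" for k
    proof -
      have "p^(Suc N - Suc k) * p^(tri (Suc k)) = p^N * p^(tri k)"
        using that by (simp add: power_add[symmetric])
      then show ?thesis
        unfolding qbin_pascal[OF pp, of "Suc k" N, simplified] c_def
        by (simp add: algebra_simps)
    qed
    then show ?thesis by (simp add: sum_subtractf sum_distrib_left)
  qed
  also have "(\<Sum>k\<le>N. qbin p N (Suc k) * (-1)^(Suc k) * p^(tri (Suc k)) * x^(Suc k))
      = (\<Sum>k\<le>Suc N. c k * x^k) - 1"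
    unfolding sum.atMost_Suc_shift[of _ N] using pp[of N] by (simp add: c_def)
  also have "(\<Sum>k\<le>Suc N. c k * x^k) = (\<Sum>k\<le>N. c k * x^k)"
    by (simp add: c_def qbin_def)
  finally have "(\<Sum>k\<le>Suc N. qbin p (Suc N) k * (-1)^k * p^(tri k) * x^k)
      = (\<Sum>k\<le>N. c k * x^k) * (1 - x*p^N)" by (simp add: algebra_simps)
  then show ?case using Suc.IH by (simp add: qpoch_Suc c_def)
qed

lemma tri_add: "tri (a + b) = tri a + tri b + a*b"
  by (induction b) (simp_all add: algebra_simps)

lemma tri2: "2 * tri n + n = n*n"
  by (induction n) (simp_all add: algebra_simps)

lemma qpoch_neg_shift:
  fixes p w :: complex
  assumes "p \<noteq> 0" "w \<noteq> 0"
  shows "qpoch (w*(inverse p)^n) p n = (-w)^n * (inverse p)^(tri (Suc n)) * qpoch (p/w) p n"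
proof (induction n)
  case 0 then show ?case by simp
next
  case (Suc n)
  have e: "w*(inverse p)^(Suc n)*p = w*(inverse p)^n" using assms(1) by (simp add: field_simps)
  have key: "1 - w*(inverse p)^(Suc n) = (-w) * (inverse p)^(Suc n) * (1 - p/w*p^n)"
  proof -
    have "p^n \<noteq> 0" using assms(1) by simp
    then show ?thesis using assms by (simp add: field_simps power_inverse)
  qed
  have "qpoch (w*(inverse p)^(Suc n)) p (Suc n) = (1 - w*(inverse p)^(Suc n)) * qpoch (w*(inverse p)^n) p n"
    unfolding qpoch_Suc' e ..
  also have "\<dots> = (-w)^(Suc n) * (inverse p)^(tri (Suc (Suc n))) * qpoch (p/w) p (Suc n)"
    unfolding Suc.IH key qpoch_Suc by (simp add: power_add mult_ac)
  finally show ?case .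
qed

lemma jtp_finite:
  fixes p w :: complex
  assumes "p \<noteq> 0" "w \<noteq> 0" and pp: "\<And>j. qpoch p p j \<noteq> 0"
  shows "qpoch w p n * qpoch (p/w) p n =
     (\<Sum>r\<le>n. qbin p (2*n) (n+r) * (-1)^r * p^(tri r) * w^r)
   + (\<Sum>i<n. qbin p (2*n) (n - Suc i) * (-1)^(Suc i) * p^(tri (Suc (Suc i))) * (inverse w)^(Suc i))"
proof -
  define ip where "ip = inverse p"
  define C where "C = (inverse (-w))^n * p^(tri (Suc n))"
  define T where "T k = qbin p (2*n) k * (-1)^k * p^(tri k) * (w*ip^n)^k * C" for k
  have ipp: "ip * p = 1" using assms(1) by (simp add: ip_def)
  have "qpoch (w*ip^n) p (n+n) = qpoch (w*ip^n) p n * qpoch w p n"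
    unfolding qpoch_add using ipp by (simp add: mult.assoc power_mult_distrib[symmetric])
  also have "\<dots> = (-w)^n * ip^(tri (Suc n)) * qpoch (p/w) p n * qpoch w p n"
    unfolding ip_def qpoch_neg_shift[OF assms(1,2)] ..
  finally have X: "qpoch (w*ip^n) p (2*n) = (-w)^n * ip^(tri (Suc n)) * qpoch (p/w) p n * qpoch w p n"
    by (simp only: mult_2)
  have c1: "(-w)^n * (inverse (-w))^n = 1"
  proof -
    have "(-w)^n * (inverse (-w))^n = ((-w) * inverse (-w))^n" by (rule power_mult_distrib[symmetric])
    also have "(-w) * inverse (-w) = 1" using assms(2) by simp
    finally show ?thesis by simp
  qed
  have c2: "ip^(tri (Suc n)) * p^(tri (Suc n)) = 1"
  proof -
    have "ip^(tri (Suc n)) * p^(tri (Suc n)) = (ip * p)^(tri (Suc n))" by (rule power_mult_distrib[symmetric])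
    then show ?thesis using ipp by simp
  qed
  have L: "qpoch (w*ip^n) p (2*n) * C = qpoch w p n * qpoch (p/w) p n"
  proof -
    have "qpoch (w*ip^n) p (2*n) * C = ((-w)^n * (inverse (-w))^n) * (ip^(tri (Suc n)) * p^(tri (Suc n)))
        * (qpoch w p n * qpoch (p/w) p n)"
      unfolding X C_def by (simp only: mult_ac)
    then show ?thesis unfolding c1 c2 by simp
  qed
  have "qpoch (w*ip^n) p (2*n) * C = (\<Sum>k\<le>2*n. T k)"
    unfolding qbinomial[OF pp] T_def by (simp add: sum_distrib_right)
  also have "(\<Sum>k\<le>2*n. T k) = (\<Sum>k<n. T k) + (\<Sum>r\<le>n. T (r + n))"
  proof -
    have "(\<Sum>k\<le>2*n. T k) = sum T {0..<n} + sum T {n..<2*n+1}"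
      by (subst sum.atLeastLessThan_concat) (auto simp: atLeast0LessThan lessThan_Suc_atMost[symmetric])
    also have "sum T {n..<2*n+1} = sum T {0+n..<(n+1)+n}" by (simp add: mult_2 add.commute)
    also have "\<dots> = (\<Sum>r\<le>n. T (r + n))"
      unfolding sum.shift_bounds_nat_ivl by (simp add: atLeast0LessThan lessThan_Suc_atMost)
    finally show ?thesis by (simp add: atLeast0LessThan)
  qed
  also have "(\<Sum>k<n. T k) = (\<Sum>i<n. T (n - Suc i))" by (rule sum.nat_diff_reindex[symmetric])
  finally have R: "qpoch (w*ip^n) p (2*n) * C = (\<Sum>r\<le>n. T (r + n)) + (\<Sum>i<n. T (n - Suc i))"
    by simp
  have sgn: "(-1::complex)^(a+n) * (inverse (-w))^n * w^(a+n) = (-1)^a * w^a" for a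
  proof -
    have i1: "(inverse (-w))^n = (-1)^n * (inverse w)^n"
    proof -
      have e: "inverse (-w) = - inverse w" by simp
      show ?thesis unfolding e by (rule power_minus)
    qed
    have i2: "w^n * (inverse w)^n = 1"
    proof -
      have "w^n * (inverse w)^n = (w * inverse w)^n" by (rule power_mult_distrib[symmetric])
      then show ?thesis using assms(2) by simp
    qed
    have i3: "(-1::complex)^n * (-1)^n = 1"
    proof -
      have "(-1::complex)^n * (-1)^n = ((-1) * (-1))^n" by (rule power_mult_distrib[symmetric])
      then show ?thesis by simp
    qed
    have "(-1::complex)^(a+n) * (inverse (-w))^n * w^(a+n) = (-1)^a * w^a * (((-1)^n * (-1)^n) * (w^n * (inverse w)^n))"
      unfolding i1 power_add by (simp only: mult_ac)
    then show ?thesis unfolding i2 i3 by simp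
  qed
  have pcancel: "p^A * ip^B * p^Cc = p^D" if "A + Cc = B + D" for A B Cc D
  proof -
    have "p^A * ip^B * p^Cc = p^(A + Cc) * ip^B" by (simp only: power_add mult_ac)
    also have "\<dots> = p^D * (ip^B * p^B)" unfolding that by (simp only: power_add mult_ac)
    also have "ip^B * p^B = 1"
    proof -
      have "ip^B * p^B = (ip * p)^B" by (rule power_mult_distrib[symmetric])
      then show ?thesis using ipp by simp
    qed
    finally show ?thesis by simp
  qed
  have Tform: "T k = qbin p (2*n) k * ((-1)^k * (inverse (-w))^n * w^k) * (p^(tri k) * ip^(n*k) * p^(tri (Suc n)))" for k
  proof -
    have e: "(w*ip^n)^k = w^k * ip^(n*k)" by (simp only: power_mult_distrib power_mult)
    show ?thesis unfolding T_def C_def e by (simp only: mult_ac)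
  qed
  have T1: "T (r + n) = qbin p (2*n) (n+r) * (-1)^r * p^(tri r) * w^r" for r
  proof -
    have ex: "tri (r + n) + tri (Suc n) = n*(r+n) + tri r"
    proof -
      have "tri (r+n) = tri r + tri n + r*n" by (rule tri_add)
      moreover have "tri (Suc n) = tri n + n" by simp
      moreover have "2 * tri n + n = n*n" by (rule tri2)
      ultimately show ?thesis by (simp add: algebra_simps)
    qed
    show ?thesis unfolding Tform sgn pcancel[OF ex] by (simp add: add.commute mult_ac)
  qed
  have T2: "T (n - Suc i) = qbin p (2*n) (n - Suc i) * (-1)^(Suc i) * p^(tri (Suc (Suc i))) * (inverse w)^(Suc i)"
    if "i < n" for i
  proof -
    from less_imp_Suc_add[OF that] obtain m where "n = Suc (i + m)" by blast
    then have m: "n = m + Suc i" by simp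
    have nm: "n - Suc i = m" using m by simp
    have ex: "tri m + tri (Suc n) = n*m + tri (Suc (Suc i))"
    proof -
      have "tri (Suc n) = tri (m + Suc (Suc i))" using m by simp
      also have "\<dots> = tri m + tri (Suc (Suc i)) + m * Suc (Suc i)" by (rule tri_add)
      finally have "tri (Suc n) = tri m + tri (Suc (Suc i)) + m * Suc (Suc i)" .
      moreover have "2 * tri m + m = m*m" by (rule tri2)
      ultimately show ?thesis unfolding m by (simp add: algebra_simps)
    qed
    have sg: "(-1::complex)^m * (inverse (-w))^n * w^m = (-1)^(Suc i) * (inverse w)^(Suc i)"
    proof -
      have i1: "(inverse (-w))^k = (-1)^k * (inverse w)^k" for k
    proof -
      have e: "inverse (-w) = - inverse w" by simp
      show ?thesis unfolding e by (rule power_minus)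
    qed
      have i2: "w^m * (inverse w)^m = 1"
      proof -
        have "w^m * (inverse w)^m = (w * inverse w)^m" by (rule power_mult_distrib[symmetric])
        then show ?thesis using assms(2) by simp
      qed
      have i3: "(-1::complex)^m * (-1)^m = 1"
      proof -
        have "(-1::complex)^m * (-1)^m = ((-1) * (-1))^m" by (rule power_mult_distrib[symmetric])
        then show ?thesis by simp
      qed
      have "(-1::complex)^m * (inverse (-w))^n * w^m = (-1)^(Suc i) * (inverse w)^(Suc i) * (((-1)^m * (-1)^m) * (w^m * (inverse w)^m))"
        unfolding i1 m power_add by (simp only: mult_ac)
      then show ?thesis unfolding i2 i3 by simp
    qed
    show ?thesis unfolding Tform nm sg pcancel[OF ex] by (simp only: mult_ac)
  qed
  have s1: "(\<Sum>r\<le>n. T (r + n)) = (\<Sum>r\<le>n. qbin p (2*n) (n+r) * (-1)^r * p^(tri r) * w^r)"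
    by (simp only: T1)
  have s2: "(\<Sum>i<n. T (n - Suc i)) = (\<Sum>i<n. qbin p (2*n) (n - Suc i) * (-1)^(Suc i) * p^(tri (Suc (Suc i))) * (inverse w)^(Suc i))"
  proof (rule sum.cong[OF refl])
    fix i assume "i \<in> {..<n}"
    then show "T (n - Suc i) = qbin p (2*n) (n - Suc i) * (-1)^(Suc i) * p^(tri (Suc (Suc i))) * (inverse w)^(Suc i)"
      using T2 by simp
  qed
  show ?thesis unfolding L[symmetric] R s1 s2 ..
qed

lemma qpoch_lin_tendsto:
  assumes "norm p < 1" "a > 0"
  shows "(\<lambda>n. qpoch x p (a*n + c)) \<longlonglongrightarrow> qpoch_inf x p"
proof -
  have "strict_mono (\<lambda>n::nat. a*n + c)" using assms(2) by (intro strict_monoI) auto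
  from LIMSEQ_subseq_LIMSEQ[OF qpoch_tendsto[OF assms(1)] this]
  show ?thesis by (simp add: o_def)
qed

lemma qbin_bound:
  assumes "norm p < 1"
  shows "\<exists>K>0. \<forall>N k. norm (qbin p N k) \<le> K"
proof -
  obtain c where c: "c > 0" "\<And>n. norm (qpoch p p n) \<ge> c" using qpochqq_bounds(1)[OF assms] by blast
  obtain B where B: "B > 0" "\<And>n. norm (qpoch p p n) \<le> B" using qpochqq_bounds(2)[OF assms] by blast
  have "norm (qbin p N k) \<le> B / (c*c)" for N k
  proof (cases "k \<le> N")
    case True
    have "norm (qbin p N k) = norm (qpoch p p N) / (norm (qpoch p p k) * norm (qpoch p p (N-k)))"
      using True by (simp add: qbin_def norm_divide norm_mult)
    also have "\<dots> \<le> B / (c*c)"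
      using B c by (intro frac_le mult_mono) (auto intro: order_trans[OF less_imp_le[OF c(1)]])
    finally show ?thesis .
  next
    case False then show ?thesis using B c by (simp add: qbin_def)
  qed
  moreover have "B / (c*c) > 0" using B c by simp
  ultimately show ?thesis by blast
qed

theorem jtp:
  fixes p w :: complex
  assumes "norm p < 1" "p \<noteq> 0" "w \<noteq> 0"
  shows "qpoch_inf p p * (qpoch_inf w p * qpoch_inf (p/w) p) =
     (\<Sum>r. (-1)^r * p^(tri r) * w^r) + (\<Sum>i. (-1)^(Suc i) * p^(tri (Suc (Suc i))) * (inverse w)^(Suc i))"
proof -
  have pp: "qpoch p p j \<noteq> 0" for j by (rule qpoch_nonzero_small[OF assms(1,1)])
  define P where "P = qpoch_inf p p"
  have P0: "P \<noteq> 0" unfolding P_def by (rule qpoch_inf_nonzero[OF assms(1) pp])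
  obtain K where K: "K > 0" "\<And>N k. norm (qbin p N k) \<le> K" using qbin_bound[OF assms(1)] by blast
  define t1 where "t1 r = (-1)^r * p^(tri r) * w^r" for r
  define t2 where "t2 i = (-1)^(Suc i) * p^(tri (Suc (Suc i))) * (inverse w)^(Suc i)" for i
  define a1 where "a1 r n = (if r \<le> n then qbin p (2*n) (n+r) * t1 r else 0)" for r n
  define a2 where "a2 i n = (if i < n then qbin p (2*n) (n - Suc i) * t2 i else 0)" for i n
  have X: "(\<lambda>n. p^n) \<longlonglongrightarrow> 0" using assms(1) by (rule LIMSEQ_power_zero)
  have st1: "summable (\<lambda>r. norm (t1 r))"
  proof (rule ratio_summable[where r="\<lambda>r. -(p^r * w)"])
    show "t1 (Suc r) = t1 r * (-(p^r * w))" for r by (simp add: t1_def power_add mult_ac)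
    show "(\<lambda>r. -(p^r * w)) \<longlonglongrightarrow> 0" using tendsto_minus[OF tendsto_mult_right_zero[OF X]] by (simp add: mult.commute)
  qed simp
  have st2: "summable (\<lambda>i. norm (t2 i))"
  proof (rule ratio_summable[where r="\<lambda>i. -(p^(Suc (Suc i)) * inverse w)"])
    show "t2 (Suc i) = t2 i * (-(p^(Suc (Suc i)) * inverse w))" for i
      by (simp add: t2_def power_add mult_ac)
    have "(\<lambda>i. -(inverse w * ((p*p) * p^i))) \<longlonglongrightarrow> -0"
      using tendsto_minus[OF tendsto_mult_right_zero[OF tendsto_mult_right_zero[OF X]]] .
    then show "(\<lambda>i. -(p^(Suc (Suc i)) * inverse w)) \<longlonglongrightarrow> 0" by (simp add: mult_ac)
  qed simp
  have lim1: "(\<lambda>n. a1 r n) \<longlonglongrightarrow> t1 r / P" for r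
  proof (rule LIMSEQ_offset[where k=r])
    have e: "a1 r (n + r) = qpoch p p (2*n + 2*r) / (qpoch p p (1*n + 2*r) * qpoch p p (1*n + 0)) * t1 r" for n
    proof -
      have h: "2*(n+r) = 2*n + 2*r" "n + r + r = 1*n + 2*r" "2*n + 2*r - (1*n + 2*r) = 1*n + 0" by simp_all
      have c: "(r \<le> n + r) = True" "(1*n + 2*r \<le> 2*n + 2*r) = True" by simp_all
      show ?thesis by (simp only: a1_def qbin_def h c if_True)
    qed
    have "(\<lambda>n. qpoch p p (2*n + 2*r) / (qpoch p p (1*n + 2*r) * qpoch p p (1*n + 0)) * t1 r)
       \<longlonglongrightarrow> P / (P * P) * t1 r"
      unfolding P_def using P0 unfolding P_def
      by (intro tendsto_intros qpoch_lin_tendsto assms(1)) auto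
    then show "(\<lambda>n. a1 r (n + r)) \<longlonglongrightarrow> t1 r / P" unfolding e using P0 by simp
  qed
  have lim2: "(\<lambda>n. a2 i n) \<longlonglongrightarrow> t2 i / P" for i
  proof (rule LIMSEQ_offset[where k="Suc i"])
    have e: "a2 i (n + Suc i) = qpoch p p (2*n + (2*i+2)) / (qpoch p p (1*n + 0) * qpoch p p (1*n + (2*i+2))) * t2 i" for n
    proof -
      have h: "2*(n + Suc i) = 2*n + (2*i+2)" "n + Suc i - Suc i = 1*n + 0" "2*n + (2*i+2) - (1*n + 0) = 1*n + (2*i+2)"
        by simp_all
      have c: "(i < n + Suc i) = True" "(1*n + 0 \<le> 2*n + (2*i+2)) = True" by simp_all
      show ?thesis by (simp only: a2_def qbin_def h c if_True)
    qed
    have "(\<lambda>n. qpoch p p (2*n + (2*i+2)) / (qpoch p p (1*n + 0) * qpoch p p (1*n + (2*i+2))) * t2 i)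
       \<longlonglongrightarrow> P / (P * P) * t2 i"
      unfolding P_def using P0 unfolding P_def
      by (intro tendsto_intros qpoch_lin_tendsto assms(1)) auto
    then show "(\<lambda>n. a2 i (n + Suc i)) \<longlonglongrightarrow> t2 i / P" unfolding e using P0 by simp
  qed
  have T1: "(\<lambda>n. suminf (\<lambda>r. a1 r n)) \<longlonglongrightarrow> suminf (\<lambda>r. t1 r / P)"
  proof (rule tannerys_theorem[where M="\<lambda>r. K * norm (t1 r)", THEN conjunct2, THEN conjunct2])
    show "\<And>r. (\<lambda>n. a1 r n) \<longlonglongrightarrow> t1 r / P" by (rule lim1)
    show "eventually (\<lambda>(r,n). norm (a1 r n) \<le> K * norm (t1 r)) (at_top \<times>\<^sub>F sequentially)"
      by (rule always_eventually) (use K(1) in \<open>auto simp: a1_def norm_mult K less_imp_le intro!: mult_right_mono mult_nonneg_nonneg\<close>)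
    show "summable (\<lambda>r. K * norm (t1 r))" by (intro summable_mult st1)
  qed simp
  have T2: "(\<lambda>n. suminf (\<lambda>i. a2 i n)) \<longlonglongrightarrow> suminf (\<lambda>i. t2 i / P)"
  proof (rule tannerys_theorem[where M="\<lambda>i. K * norm (t2 i)", THEN conjunct2, THEN conjunct2])
    show "\<And>i. (\<lambda>n. a2 i n) \<longlonglongrightarrow> t2 i / P" by (rule lim2)
    show "eventually (\<lambda>(i,n). norm (a2 i n) \<le> K * norm (t2 i)) (at_top \<times>\<^sub>F sequentially)"
      by (rule always_eventually) (use K(1) in \<open>auto simp: a2_def norm_mult K less_imp_le intro!: mult_right_mono mult_nonneg_nonneg\<close>)
    show "summable (\<lambda>i. K * norm (t2 i))" by (intro summable_mult st2)
  qed simp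
  have fin: "qpoch w p n * qpoch (p/w) p n = suminf (\<lambda>r. a1 r n) + suminf (\<lambda>i. a2 i n)" for n
  proof -
    have "(\<lambda>r. a1 r n) sums (\<Sum>r\<in>{..n}. a1 r n)" by (rule sums_finite) (auto simp: a1_def)
    moreover have "(\<lambda>i. a2 i n) sums (\<Sum>i\<in>{..<n}. a2 i n)" by (rule sums_finite) (auto simp: a2_def)
    ultimately show ?thesis unfolding jtp_finite[OF assms(2,3) pp]
      by (simp add: sums_iff a1_def a2_def t1_def t2_def mult.assoc)
  qed
  have L: "(\<lambda>n. qpoch w p n * qpoch (p/w) p n) \<longlonglongrightarrow> qpoch_inf w p * qpoch_inf (p/w) p"
    by (intro tendsto_mult qpoch_tendsto assms(1))
  have "(\<lambda>n. qpoch w p n * qpoch (p/w) p n) \<longlonglongrightarrow> suminf (\<lambda>r. t1 r / P) + suminf (\<lambda>i. t2 i / P)"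
    unfolding fin by (intro tendsto_add T1 T2)
  then have "qpoch_inf w p * qpoch_inf (p/w) p = suminf (\<lambda>r. t1 r / P) + suminf (\<lambda>i. t2 i / P)"
    using L LIMSEQ_unique by blast
  also have "\<dots> = (suminf t1 + suminf t2) / P"
    using summable_norm_cancel[OF st1] summable_norm_cancel[OF st2]
    by (simp add: suminf_divide add_divide_distrib)
  finally show ?thesis using P0 unfolding P_def t1_def t2_def by (simp add: field_simps)
qed

lemma pair_summable_geom:
  fixes F :: "nat \<Rightarrow> nat \<Rightarrow> complex" and s c :: real
  assumes "0 \<le> s" "s < 1" "0 \<le> c" "\<And>n r. norm (F n r) \<le> c * s^n * s^r"
  shows "(\<lambda>(n,r). F n r) summable_on UNIV"
proof -
  define G where "G = (\<lambda>(n::nat, r::nat). c * s^n * s^r)"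
  have gs: "summable (\<lambda>k. norm (s^k))" using assms(1,2) by (simp add: summable_geometric)
  have row: "((\<lambda>r. G (n, r)) has_sum (c * s^n * (1/(1-s)))) UNIV" for n
  proof -
    have "(\<lambda>r. c * s^n * s^r) sums (c * s^n * (1/(1-s)))"
      using assms(1,2) by (intro sums_mult geometric_sums) auto
    moreover have "summable (\<lambda>r. norm (c * s^n * s^r))"
      using assms(1,3) gs by (simp add: abs_mult summable_mult)
    ultimately show ?thesis unfolding G_def by (simp add: norm_summable_imp_has_sum)
  qed
  have col: "(\<lambda>n. c * s^n * (1/(1-s))) summable_on UNIV"
  proof (rule norm_summable_imp_summable_on)
    show "summable (\<lambda>n. norm (c * s^n * (1/(1-s))))"
      using assms(1,2,3) gs by (simp add: abs_mult summable_mult summable_mult2)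
  qed
  have Gs: "G summable_on Sigma UNIV (\<lambda>_. UNIV)"
    by (rule summable_on_SigmaI[OF row col]) (use assms in \<open>auto simp: G_def\<close>)
  have "(\<lambda>x. norm ((\<lambda>(n,r). F n r) x)) summable_on UNIV"
  proof (rule summable_on_comparison_test[OF Gs[simplified]])
    show "norm ((\<lambda>(n,r). F n r) x) \<le> G x" for x using assms(4) by (auto simp: G_def split: prod.splits)
  qed auto
  then show ?thesis by (rule abs_summable_summable)
qed

lemma swap_sums:
  fixes F :: "nat \<Rightarrow> nat \<Rightarrow> complex"
  assumes S: "(\<lambda>(n,r). F n r) summable_on UNIV"
    and R: "\<And>n. F n sums Rw n" "\<And>n. summable (\<lambda>r. norm (F n r))"
    and C: "\<And>r. (\<lambda>n. F n r) sums Cl r" "\<And>r. summable (\<lambda>n. norm (F n r))"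
    and RS: "summable (\<lambda>n. norm (Rw n))" and CS: "summable (\<lambda>r. norm (Cl r))"
  shows "suminf Rw = suminf Cl"
proof -
  have S': "(\<lambda>(n,r). F n r) summable_on (UNIV \<times> UNIV)" using S by simp
  have "infsum (\<lambda>n. infsum (\<lambda>r. F n r) UNIV) UNIV = infsum (\<lambda>r. infsum (\<lambda>n. F n r) UNIV) UNIV"
    by (rule infsum_swap_banach[OF S'])
  moreover have "infsum (\<lambda>r. F n r) UNIV = Rw n" for n
    using norm_summable_imp_has_sum[OF R(2) R(1)] by (simp add: infsumI)
  moreover have "infsum (\<lambda>n. F n r) UNIV = Cl r" for r
    using norm_summable_imp_has_sum[OF C(2) C(1)] by (simp add: infsumI)
  ultimately have "infsum Rw UNIV = infsum Cl UNIV" by simp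
  moreover have "infsum Rw UNIV = suminf Rw"
    using norm_summable_imp_has_sum[OF RS summable_sums[OF summable_norm_cancel[OF RS]]] by (simp add: infsumI)
  moreover have "infsum Cl UNIV = suminf Cl"
    using norm_summable_imp_has_sum[OF CS summable_sums[OF summable_norm_cancel[OF CS]]] by (simp add: infsumI)
  ultimately show ?thesis by simp
qed

definition FF :: "complex \<Rightarrow> nat \<Rightarrow> nat \<Rightarrow> complex" where
  "FF q n r = (if r \<le> n then q^(n*n) * alpha q r / (qpoch q q (n-r) * qpoch q q (n+r)) else 0)"

lemma norm_alpha_le:
  assumes "norm q < 1"
  shows "norm (alpha q r) \<le> 2"
proof -
  have a: "norm (q^k) \<le> 1" for k using assms by (simp add: norm_power power_le_one)
  have "norm (1 + q^r) \<le> 2" using norm_triangle_ineq[of 1 "q^r"] a[of r] by simp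
  then have "norm (1 + q^r) * norm (q^pent r) \<le> 2 * 1"
    using a[of "pent r"] by (intro mult_mono) auto
  then show ?thesis by (simp add: alpha_def norm_mult norm_power)
qed

lemma FF_row:
  assumes "norm q < 1"
  shows "FF q n sums (q^(n*n) / qpoch q q n)" "summable (\<lambda>r. norm (FF q n r))"
proof -
  have qq: "qpoch q q k \<noteq> 0" for k by (rule qpoch_nonzero_small[OF assms assms])
  have "FF q n sums (\<Sum>r\<in>{..n}. FF q n r)" by (rule sums_finite) (auto simp: FF_def)
  moreover have "(\<Sum>r\<in>{..n}. FF q n r) = q^(n*n) / qpoch q q n"
  proof -
    have "(\<Sum>r\<in>{..n}. FF q n r) = q^(n*n) * (\<Sum>r\<le>n. alpha q r / (qpoch q q (n-r) * qpoch q q (n+r)))"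
      by (simp add: FF_def sum_distrib_left)
    then show ?thesis unfolding bailey_pair[OF qq] by simp
  qed
  ultimately show "FF q n sums (q^(n*n) / qpoch q q n)" by simp
  have "(\<lambda>r. norm (FF q n r)) sums (\<Sum>r\<in>{..n}. norm (FF q n r))" by (rule sums_finite) (auto simp: FF_def)
  then show "summable (\<lambda>r. norm (FF q n r))" by (rule sums_summable)
qed

lemma FF_col:
  assumes "norm q < 1"
  shows "(\<lambda>n. FF q n r) sums (alpha q r * q^(r*r) / qpoch_inf q q)" "summable (\<lambda>n. norm (FF q n r))"
proof -
  define w where "w = q^(2*r)"
  have wq: "norm (w*q) < 1" unfolding w_def using norm_less_one_mult[OF assms assms, of "2*r"]
    by (simp add: mult.commute)
  have nzw: "qpoch (w*q) q n \<noteq> 0" for n by (rule qpoch_nonzero_small[OF assms wq])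
  define K where "K = alpha q r * q^(r*r) / qpoch q q (2*r)"
  have e: "FF q (m + r) r = K * dd q w m" for m
  proof -
    have x: "q^((m+r)*(m+r)) = q^(m*m) * w^m * q^(r*r)"
    proof -
      have "(m+r)*(m+r) = m*m + (2*r)*m + r*r" by (simp add: algebra_simps)
      then show ?thesis unfolding w_def by (simp add: power_add power_mult)
    qed
    have y: "qpoch q q (m + r + r) = qpoch q q (2*r) * qpoch (w*q) q m"
    proof -
      have h: "m + r + r = 2*r + m" by simp
      have "qpoch q q (m + r + r) = qpoch q q (2*r + m)" by (simp only: h)
      also have "\<dots> = qpoch q q (2*r) * qpoch (q*q^(2*r)) q m" by (rule qpoch_add)
      also have "q*q^(2*r) = w*q" by (simp add: w_def mult.commute)
      finally show ?thesis .
    qed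
    show ?thesis unfolding FF_def K_def dd_def using x y by (simp add: divide_inverse inverse_mult_distrib ac_simps)
  qed
  have D: "dd q w sums (1 / qpoch_inf (w*q) q)" by (rule durfee_sums[OF assms nzw])
  have split: "qpoch_inf q q = qpoch q q (2*r) * qpoch_inf (w*q) q"
    unfolding w_def qpoch_inf_split[OF assms, of q "2*r"] by (simp add: mult.commute)
  have "(\<lambda>m. FF q (m + r) r) sums (K * (1 / qpoch_inf (w*q) q))"
    unfolding e by (rule sums_mult[OF D])
  moreover have "K * (1 / qpoch_inf (w*q) q) = alpha q r * q^(r*r) / qpoch_inf q q"
    unfolding K_def split by simp
  moreover have "(\<Sum>i<r. FF q i r) = 0" by (simp add: FF_def)
  ultimately show "(\<lambda>n. FF q n r) sums (alpha q r * q^(r*r) / qpoch_inf q q)"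
    using sums_iff_shift[of "\<lambda>n. FF q n r" r] by simp
  have "summable (\<lambda>m. norm (FF q (m + r) r))"
    unfolding e norm_mult by (rule summable_mult[OF dd_summable[OF assms]])
  then show "summable (\<lambda>n. norm (FF q n r))" using summable_iff_shift[of "\<lambda>n. norm (FF q n r)" r] by simp
qed

lemma FF_bound:
  assumes "norm q < 1" "q \<noteq> 0" "\<And>k. norm (qpoch q q k) \<ge> c" "c > 0"
  shows "norm (FF q n r) \<le> (2 / (norm q * c * c)) * norm q ^ n * norm q ^ r"
proof (cases "r \<le> n")
  case True
  have "n + r \<le> n*n + 1"
  proof (cases n)
    case 0 then show ?thesis using True by simp
  next
    case (Suc k) then show ?thesis using True by (simp add: algebra_simps)
  qed
  then have "norm q ^ (n*n+1) \<le> norm q ^ (n+r)" using assms(1) by (intro power_decreasing) auto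
  then have qn: "norm q ^ (n*n) \<le> norm q ^ (n+r) / norm q" using assms(2) by (simp add: field_simps)
  have "norm (FF q n r) = norm q ^ (n*n) * norm (alpha q r) / (norm (qpoch q q (n-r)) * norm (qpoch q q (n+r)))"
    using True by (simp add: FF_def norm_mult norm_divide norm_power)
  also have "\<dots> \<le> (norm q ^ (n+r) / norm q) * 2 / (c * c)"
    using qn norm_alpha_le[OF assms(1), of r] assms(3,4)
    by (intro frac_le mult_mono) (auto intro: order_trans[OF less_imp_le[OF assms(4)]])
  also have "\<dots> = (2 / (norm q * c * c)) * norm q ^ n * norm q ^ r" by (simp add: power_add field_simps)
  finally show ?thesis .
next
  case False then show ?thesis using assms by (simp add: FF_def)
qed

theorem rr_step:
  assumes "norm q < 1" "q \<noteq> 0"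
  shows "(\<Sum>n. q^(n*n) / qpoch q q n) = (\<Sum>r. alpha q r * q^(r*r) / qpoch_inf q q)"
proof -
  obtain c where c: "c > 0" "\<And>n. norm (qpoch q q n) \<ge> c" using qpochqq_bounds(1)[OF assms(1)] by blast
  have S: "(\<lambda>(n,r). FF q n r) summable_on UNIV"
    by (rule pair_summable_geom[OF _ _ _ FF_bound[OF assms c(2) c(1)]]) (use assms c in auto)
  have RS: "summable (\<lambda>n. norm (q^(n*n) / qpoch q q n))"
  proof (rule summable_comparison_test'[where N=0])
    show "summable (\<lambda>n. norm q ^ n / c)" using assms(1) by (intro summable_divide summable_geometric) auto
    fix n :: nat
    have "norm q ^ (n*n) \<le> norm q ^ n" using assms(1) by (intro power_decreasing) (auto simp: le_square)
    then show "norm (norm (q^(n*n) / qpoch q q n)) \<le> norm q ^ n / c"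
      using c by (simp add: norm_divide norm_power) (intro frac_le, auto)
  qed
  have CS: "summable (\<lambda>r. norm (alpha q r * q^(r*r) / qpoch_inf q q))"
  proof (rule summable_comparison_test'[where N=0])
    show "summable (\<lambda>r. 2 * norm q ^ r / norm (qpoch_inf q q))"
      using assms(1) by (intro summable_divide summable_mult summable_geometric) auto
    fix r :: nat
    have "norm q ^ (r*r) \<le> norm q ^ r" using assms(1) by (intro power_decreasing) (auto simp: le_square)
    then have "norm (alpha q r) * norm q ^ (r*r) \<le> 2 * norm q ^ r"
      using norm_alpha_le[OF assms(1), of r] by (intro mult_mono) auto
    then show "norm (norm (alpha q r * q^(r*r) / qpoch_inf q q)) \<le> 2 * norm q ^ r / norm (qpoch_inf q q)"
      by (simp add: norm_divide norm_mult norm_power divide_right_mono)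
  qed
  show ?thesis
    by (rule swap_sums[OF S FF_row[OF assms(1)] FF_col[OF assms(1)] RS CS])
qed

lemma norm_pow_lt1:
  fixes q :: complex
  assumes "norm q < 1" "k \<ge> 1"
  shows "norm (q^k) < 1"
proof -
  have "norm q ^ k \<le> norm q" using assms by (metis less_imp_le norm_ge_zero power_decreasing power_one_right)
  then show ?thesis using assms(1) by (simp add: norm_power)
qed

lemma pent2: "2 * pent r + r = 3 * (r * r)"
  by (induction r) (simp_all add: algebra_simps)

lemma expA: "5 * tri r + 2 * r = pent r + r * r"
  using tri2[of r] pent2[of r] by linarith

lemma expB: "5 * tri (Suc r) = (pent r + r * r + r) + 2 * r"
  using tri2[of r] pent2[of r] by simp

lemma alpha_split:
  "alpha q r * q^(r*r) = (-1)^r * q^(pent r + r*r) + (if r = 0 then 0 else (-1)^r * q^(pent r + r*r + r))"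
  by (simp add: alpha_def power_add algebra_simps)

lemma jtp_special:
  fixes q :: complex
  assumes "norm q < 1" "q \<noteq> 0"
  shows "(\<Sum>r. alpha q r * q^(r*r)) = qpoch_inf (q^5) (q^5) * (qpoch_inf (q^2) (q^5) * qpoch_inf (q^3) (q^5))"
proof -
  define A where "A r = (-1)^r * q^(pent r + r*r)" for r
  define B where "B r = (if r = 0 then 0 else (-1)^r * q^(pent r + r*r + r))" for r
  have p5: "norm (q^5) < 1" by (rule norm_pow_lt1[OF assms(1)]) simp
  have w: "q^2 \<noteq> 0" using assms(2) by simp
  have pw: "q^5 / q^2 = q^3" using assms(2) by (simp add: field_simps eval_nat_numeral)
  have nb: "norm (q^k) \<le> norm q ^ r" if "r \<le> k" for k r
    using assms(1) that by (simp add: norm_power power_decreasing)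
  have sA: "summable (\<lambda>r. norm (A r))"
  proof (rule summable_comparison_test'[where N=0])
    show "summable (\<lambda>r. norm q ^ r)" using assms(1) by (simp add: summable_geometric)
    show "norm (norm (A r)) \<le> norm q ^ r" for r
    proof -
      have h: "r \<le> pent r + r*r" by (simp add: le_square trans_le_add2)
      show ?thesis using nb[OF h] by (simp add: A_def norm_mult norm_power)
    qed
  qed
  have sB: "summable (\<lambda>r. norm (B r))"
  proof (rule summable_comparison_test'[where N=0])
    show "summable (\<lambda>r. norm q ^ r)" using assms(1) by (simp add: summable_geometric)
    show "norm (norm (B r)) \<le> norm q ^ r" for r
    proof -
      have h: "r \<le> pent r + r*r + r" by simp
      show ?thesis using nb[OF h] by (simp add: B_def norm_mult norm_power)
    qed
  qed
  have eA: "(-1)^r * (q^5)^(tri r) * (q^2)^r = A r" for r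
  proof -
    have "(q^5)^(tri r) * (q^2)^r = q^(5 * tri r + 2 * r)" by (simp add: power_mult[symmetric] power_add)
    then show ?thesis unfolding A_def expA by (simp add: mult.assoc)
  qed
  have eB: "(-1)^(Suc i) * (q^5)^(tri (Suc (Suc i))) * (inverse (q^2))^(Suc i) = B (Suc i)" for i
  proof -
    define r where "r = Suc i"
    have "(q^5)^(tri (Suc r)) = q^(5 * tri (Suc r))" by (simp only: power_mult)
    also have "\<dots> = q^((pent r + r*r + r) + 2*r)" by (simp only: expB)
    also have "\<dots> = q^(pent r + r*r + r) * (q^2)^r" by (simp only: power_add power_mult)
    finally have "(q^5)^(tri (Suc r)) = q^(pent r + r*r + r) * (q^2)^r" .
    moreover have "(q^2)^r * (inverse (q^2))^r = 1"
    proof -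
      have "(q^2)^r * (inverse (q^2))^r = (q^2 * inverse (q^2))^r" by (rule power_mult_distrib[symmetric])
      then show ?thesis using w by simp
    qed
    ultimately have "(q^5)^(tri (Suc r)) * (inverse (q^2))^r = q^(pent r + r*r + r)"
      by (metis mult.assoc mult.right_neutral)
    then show ?thesis unfolding B_def r_def[symmetric] by (simp add: r_def mult.assoc)
  qed
  have J: "qpoch_inf (q^5) (q^5) * (qpoch_inf (q^2) (q^5) * qpoch_inf (q^3) (q^5)) = suminf A + (\<Sum>i. B (Suc i))"
    using jtp[OF p5 _ w] assms(2) unfolding pw eA eB by simp
  have B0: "B 0 = 0" by (simp add: B_def)
  have "suminf B = (\<Sum>i. B (Suc i))"
    using suminf_split_head[OF summable_norm_cancel[OF sB]] B0 by simp
  moreover have "(\<Sum>r. alpha q r * q^(r*r)) = suminf A + suminf B"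
    unfolding alpha_split A_def[symmetric] B_def[symmetric]
    by (rule suminf_add[OF summable_norm_cancel[OF sA] summable_norm_cancel[OF sB], symmetric])
  ultimately show ?thesis using J by simp
qed

lemma qpoch5:
  "qpoch q q (5*N) = qpoch q (q^5) N * qpoch (q^2) (q^5) N * qpoch (q^3) (q^5) N * qpoch (q^4) (q^5) N * qpoch (q^5) (q^5) N"
proof (induction N)
  case 0 then show ?case by simp
next
  case (Suc N)
  have e: "5 * Suc N = 5*N + 5" by simp
  have f: "qpoch x q 5 = (1-x)*(1-x*q)*(1-x*q^2)*(1-x*q^3)*(1-x*q^4)" for x
    by (simp add: qpoch_def eval_nat_numeral lessThan_Suc mult_ac)
  have g: "(1-q*P)*(1-q*P*q)*(1-q*P*q^2)*(1-q*P*q^3)*(1-q*P*q^4)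
      = (1-q*P)*(1-q^2*P)*(1-q^3*P)*(1-q^4*P)*(1-q^5*P)" for P
    by (simp add: eval_nat_numeral mult_ac)
  have "qpoch q q (5 * Suc N) = qpoch q q (5*N) * qpoch (q*q^(5*N)) q 5"
    unfolding e by (rule qpoch_add)
  also have "\<dots> = qpoch q q (5*N) * ((1-q*(q^5)^N)*(1-q^2*(q^5)^N)*(1-q^3*(q^5)^N)*(1-q^4*(q^5)^N)*(1-q^5*(q^5)^N))"
    unfolding f power_mult g ..
  finally show ?case unfolding Suc.IH qpoch_Suc by (simp add: mult_ac)
qed

lemma qpoch_inf5:
  assumes "norm q < 1"
  shows "qpoch_inf q q = qpoch_inf q (q^5) * qpoch_inf (q^2) (q^5) * qpoch_inf (q^3) (q^5) * qpoch_inf (q^4) (q^5) * qpoch_inf (q^5) (q^5)"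
proof -
  have p5: "norm (q^5) < 1" by (rule norm_pow_lt1[OF assms(1)]) simp
  have "(\<lambda>N. qpoch q q (5*N + 0)) \<longlonglongrightarrow> qpoch_inf q q" by (rule qpoch_lin_tendsto[OF assms]) simp
  moreover have "(\<lambda>N. qpoch q q (5*N + 0)) \<longlonglongrightarrow> qpoch_inf q (q^5) * qpoch_inf (q^2) (q^5) * qpoch_inf (q^3) (q^5) * qpoch_inf (q^4) (q^5) * qpoch_inf (q^5) (q^5)"
    unfolding add_0_right qpoch5 by (intro tendsto_mult qpoch_tendsto p5)
  ultimately show ?thesis using LIMSEQ_unique by blast
qed

theorem rogers_ramanujan:
  fixes q :: complex
  assumes "norm q < 1" "q \<noteq> 0"
  shows "(\<lambda>n. q^(n*n) / qpoch q q n) sums (1 / (qpoch_inf q (q^5) * qpoch_inf (q^4) (q^5)))"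
proof -
  have p5: "norm (q^5) < 1" by (rule norm_pow_lt1[OF assms(1)]) simp
  have nzk: "norm (q^k) < 1" if "k \<ge> 1" for k
  proof -
    have "norm q ^ k \<le> norm q" using assms(1) that by (metis less_imp_le norm_ge_zero power_decreasing power_one_right)
    then show ?thesis using assms(1) by (simp add: norm_power)
  qed
  have nz: "qpoch_inf (q^k) (q^5) \<noteq> 0" if "k \<ge> 1" for k
    by (rule qpoch_inf_nonzero[OF p5 qpoch_nonzero_small[OF p5 nzk[OF that]]])
  have RS: "summable (\<lambda>n. norm (q^(n*n) / qpoch q q n))"
  proof -
    obtain c where c: "c > 0" "\<And>n. norm (qpoch q q n) \<ge> c" using qpochqq_bounds(1)[OF assms(1)] by blast
    show ?thesis
    proof (rule summable_comparison_test'[where N=0])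
      show "summable (\<lambda>n. norm q ^ n / c)" using assms(1) by (intro summable_divide summable_geometric) auto
      fix n :: nat
      have "norm q ^ (n*n) \<le> norm q ^ n" using assms(1) by (intro power_decreasing) (auto simp: le_square)
      then show "norm (norm (q^(n*n) / qpoch q q n)) \<le> norm q ^ n / c"
        using c by (simp add: norm_divide norm_power) (intro frac_le, auto)
    qed
  qed
  have "(\<Sum>n. q^(n*n) / qpoch q q n) = (\<Sum>r. alpha q r * q^(r*r) / qpoch_inf q q)"
    by (rule rr_step[OF assms])
  also have "\<dots> = (\<Sum>r. alpha q r * q^(r*r)) / qpoch_inf q q"
  proof (rule suminf_divide)
    have "summable (\<lambda>r. alpha q r * q^(r*r))"
    proof (rule summable_comparison_test'[where N=0])
      show "summable (\<lambda>r. 2 * norm q ^ r)" using assms(1) by (intro summable_mult summable_geometric) auto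
      fix r :: nat
      have "norm q ^ (r*r) \<le> norm q ^ r" using assms(1) by (intro power_decreasing) (auto simp: le_square)
      then show "norm (alpha q r * q^(r*r)) \<le> 2 * norm q ^ r"
        using norm_alpha_le[OF assms(1), of r] by (simp add: norm_mult norm_power) (intro mult_mono, auto)
    qed
    then show "summable (\<lambda>r. alpha q r * q^(r*r))" .
  qed
  also have "\<dots> = 1 / (qpoch_inf q (q^5) * qpoch_inf (q^4) (q^5))"
    unfolding jtp_special[OF assms] qpoch_inf5[OF assms(1)]
    using nz[of 2] nz[of 3] nz[of 5] by (simp add: field_simps)
  finally show ?thesis using RS by (simp add: summable_sums summable_norm_cancel sums_iff)
qed

definition mterm :: "complex \<Rightarrow> complex \<Rightarrow> complex \<Rightarrow> complex \<Rightarrow> complex \<Rightarrow> nat \<Rightarrow> nat \<Rightarrow> complex" where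
  "mterm q a k y z j n = (
        (1 - k * q ^ (2 * n + 2 * j)) * qpoch (k / a) q n * qpoch k q (n + 2 * j)
          * qpoch (y * q ^ j) q n * qpoch (z * q ^ j) q n
          * qpoch (q * a / y) q j * qpoch (q * a / z) q j
        / ((1 - k) * qpoch q q n * qpoch (a * q) q (n + 2 * j)
          * qpoch (q * k / y) q (n + j) * qpoch (q * k / z) q (n + j) * qpoch q q j)
        * (q * a / (y * z)) ^ n * q ^ (j ^ 2))"

definition Cj :: "complex \<Rightarrow> complex \<Rightarrow> complex \<Rightarrow> complex \<Rightarrow> complex \<Rightarrow> nat \<Rightarrow> complex" where
  "Cj q a k y z j = qpoch k q (2*j) * qpoch (q*a/y) q j * qpoch (q*a/z) q j * q^(j^2)
     / ((1-k) * qpoch (a*q) q (2*j) * qpoch (q*k/y) q j * qpoch (q*k/z) q j * qpoch q q j)"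

definition Pref :: "complex \<Rightarrow> complex \<Rightarrow> complex \<Rightarrow> complex \<Rightarrow> complex \<Rightarrow> complex" where
  "Pref q a k y z = (qpoch_inf (q * k) q * qpoch_inf (q * k / (y * z)) q
         * qpoch_inf (q * a / y) q * qpoch_inf (q * a / z) q)
      / (qpoch_inf (q * k / y) q * qpoch_inf (q * k / z) q
         * qpoch_inf (q * a) q * qpoch_inf (q * a / (y * z)) q)"

lemma mterm_eq:
  assumes "q \<noteq> 0" "y \<noteq> 0" "z \<noteq> 0"
  shows "mterm q a k y z j n = Cj q a k y z j *
     tt q (k*q^(2*j)) (k/a) (y*q^j) (z*q^j) (a*q*q^(2*j)) (q*a/(y*z)) n"
proof -
  have e1: "qpoch k q (n + 2*j) = qpoch k q (2*j) * qpoch (k*q^(2*j)) q n"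
    using qpoch_add[of k q "2*j" n] by (simp add: add.commute)
  have e2: "qpoch (a*q) q (n + 2*j) = qpoch (a*q) q (2*j) * qpoch (a*q*q^(2*j)) q n"
    using qpoch_add[of "a*q" q "2*j" n] by (simp add: add.commute)
  have p2: "q^(2*j) = q^j * q^j" by (simp add: mult_2 power_add)
  have g3: "k*q^(2*j)*q/(y*q^j) = q*k/y*q^j" unfolding p2 using assms by (simp add: field_simps)
  have g4: "k*q^(2*j)*q/(z*q^j) = q*k/z*q^j" unfolding p2 using assms by (simp add: field_simps)
  have e3: "qpoch (q*k/y) q (n + j) = qpoch (q*k/y) q j * qpoch (k*q^(2*j)*q/(y*q^j)) q n"
    unfolding g3 using qpoch_add[of "q*k/y" q j n] by (simp add: add.commute)
  have e4: "qpoch (q*k/z) q (n + j) = qpoch (q*k/z) q j * qpoch (k*q^(2*j)*q/(z*q^j)) q n"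
    unfolding g4 using qpoch_add[of "q*k/z" q j n] by (simp add: add.commute)
  have e5: "k * q ^ (2 * n + 2 * j) = k*q^(2*j)*q^(2*n)" by (simp add: power_add mult_ac)
  show ?thesis
    unfolding mterm_def tt_def vv_def Cj_def e1 e2 e3 e4 e5
    by (simp add: divide_inverse inverse_mult_distrib ac_simps)
qed

lemma absC:
  fixes N1 Na Nb Qj D1 Dy Dz Qq M1 Ma Mb Mk E1 Ey Ez X KQ NMa NMb EA EY EZ kk :: complex
  assumes "N1*M1 = (1-kk)*KQ" "Na*Ma = NMa" "Nb*Mb = NMb" "D1*E1 = EA" "Dy*Ey = EY" "Dz*Ez = EZ" "1-kk \<noteq> 0"
  shows "(N1*Na*Nb*Qj/((1-kk)*D1*Dy*Dz*Qq)) * (M1*Ma*Mb*Mk/(E1*Ey*Ez*X))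
       = (KQ*Mk*NMa*NMb/(EY*EZ*EA*X)) * (Qj/Qq)"
proof -
  have "(N1*Na*Nb*Qj/((1-kk)*D1*Dy*Dz*Qq)) * (M1*Ma*Mb*Mk/(E1*Ey*Ez*X))
      = ((N1*M1)*(Na*Ma)*(Nb*Mb)*Mk*Qj) / ((1-kk)*(D1*E1)*(Dy*Ey)*(Dz*Ez)*X*Qq)"
    by (simp add: divide_inverse inverse_mult_distrib ac_simps)
  also have "\<dots> = ((1-kk)*(KQ*Mk*NMa*NMb*Qj)) / ((1-kk)*(EY*EZ*EA*X*Qq))"
    unfolding assms(1-6) by (simp add: ac_simps)
  also have "\<dots> = (KQ*Mk*NMa*NMb*Qj) / (EY*EZ*EA*X*Qq)"
    using assms(7) by (rule mult_divide_mult_cancel_left)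
  also have "\<dots> = (KQ*Mk*NMa*NMb/(EY*EZ*EA*X)) * (Qj/Qq)"
    by (simp add: divide_inverse inverse_mult_distrib ac_simps)
  finally show ?thesis .
qed

lemma inner_sums:
  assumes hq: "norm q < 1" and q0: "q \<noteq> 0"
    and hqa: "norm (q * a / (y * z)) < 1"
    and hk: "k \<noteq> 1"
    and ha: "a \<noteq> 0" and hy: "y \<noteq> 0" and hz: "z \<noteq> 0"
    and hden_a: "\<And>m. qpoch (a * q) q m \<noteq> 0"
    and hden_y: "\<And>m. qpoch (q * k / y) q m \<noteq> 0"
    and hden_z: "\<And>m. qpoch (q * k / z) q m \<noteq> 0"
  shows "mterm q a k y z j sums (Pref q a k y z * (q^(j*j) / qpoch q q j))"
    "summable (\<lambda>n. norm (mterm q a k y z j n))"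
proof -
  define A b c d u x where "A = k*q^(2*j)" and "b = k/a" and "c = y*q^j" and "d = z*q^j"
    and "u = a*q*q^(2*j)" and "x = q*a/(y*z)"
  have p2: "q^(2*j) = q^j * q^j" by (simp add: mult_2 power_add)
  have c0: "c \<noteq> 0" "d \<noteq> 0" using q0 hy hz by (simp_all add: c_def d_def)
  have ux: "u = x*c*d" unfolding u_def x_def c_def d_def p2 using hy hz by (simp add: field_simps)
  have bx: "b*x*c*d = A*q" unfolding b_def x_def c_def d_def A_def p2 using ha hy hz by (simp add: field_simps)
  have gc: "A*q/c = q*k/y*q^j" unfolding A_def c_def p2 using q0 hy by (simp add: field_simps)
  have gd: "A*q/d = q*k/z*q^j" unfolding A_def d_def p2 using q0 hz by (simp add: field_simps)
  have guc: "u/c = q*a/y*q^j" unfolding u_def c_def p2 using q0 hy by (simp add: field_simps)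
  have gud: "u/d = q*a/z*q^j" unfolding u_def d_def p2 using q0 hz by (simp add: field_simps)
  have gcd: "A*q/(c*d) = q*k/(y*z)" unfolding A_def c_def d_def p2 using q0 hy hz by (simp add: field_simps)
  have nzu: "qpoch u q n \<noteq> 0" for n unfolding u_def by (rule qpoch_nz_shift[OF hden_a])
  have nzc: "qpoch (A*q/c) q n \<noteq> 0" for n unfolding gc by (rule qpoch_nz_shift[OF hden_y])
  have nzd: "qpoch (A*q/d) q n \<noteq> 0" for n unfolding gd by (rule qpoch_nz_shift[OF hden_z])
  have hx: "norm x < 1" using hqa by (simp add: x_def)
  have V: "tt q A b c d u x sums (qpoch_inf A q * qpoch_inf (u/c) q * qpoch_inf (u/d) q * qpoch_inf (A*q/(c*d)) q
     / (qpoch_inf u q * qpoch_inf (A*q/c) q * qpoch_inf (A*q/d) q * qpoch_inf x q))"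
    by (rule vwp_sums[OF hq hx c0 ux bx nzu nzc nzd])
  have M: "mterm q a k y z j = (\<lambda>n. Cj q a k y z j * tt q A b c d u x n)"
    using mterm_eq[OF q0 hy hz] unfolding A_def b_def c_def d_def u_def x_def by (intro ext) simp
  have S1: "mterm q a k y z j sums (Cj q a k y z j * (qpoch_inf A q * qpoch_inf (u/c) q * qpoch_inf (u/d) q * qpoch_inf (A*q/(c*d)) q
     / (qpoch_inf u q * qpoch_inf (A*q/c) q * qpoch_inf (A*q/d) q * qpoch_inf x q)))"
    unfolding M by (rule sums_mult[OF V])
  have k1: "1 - k \<noteq> 0" using hk by simp
  have sp1: "qpoch k q (2*j) * qpoch_inf A q = (1-k) * qpoch_inf (q*k) q"
  proof -
    have "qpoch k q (2*j) * qpoch_inf A q = qpoch_inf k q" unfolding A_def by (rule qpoch_inf_split[OF hq, symmetric])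
    also have "\<dots> = qpoch k q 1 * qpoch_inf (k*q^1) q" by (rule qpoch_inf_split[OF hq])
    finally show ?thesis by (simp add: qpoch_def mult.commute)
  qed
  have sp2: "qpoch (q*a/y) q j * qpoch_inf (u/c) q = qpoch_inf (q*a/y) q"
    unfolding guc by (rule qpoch_inf_split[OF hq, symmetric])
  have sp3: "qpoch (q*a/z) q j * qpoch_inf (u/d) q = qpoch_inf (q*a/z) q"
    unfolding gud by (rule qpoch_inf_split[OF hq, symmetric])
  have sp4: "qpoch (a*q) q (2*j) * qpoch_inf u q = qpoch_inf (q*a) q"
    unfolding u_def qpoch_inf_split[OF hq, of "a*q" "2*j", symmetric] by (simp add: mult.commute)
  have sp5: "qpoch (q*k/y) q j * qpoch_inf (A*q/c) q = qpoch_inf (q*k/y) q"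
    unfolding gc by (rule qpoch_inf_split[OF hq, symmetric])
  have sp6: "qpoch (q*k/z) q j * qpoch_inf (A*q/d) q = qpoch_inf (q*k/z) q"
    unfolding gd by (rule qpoch_inf_split[OF hq, symmetric])
  have "Cj q a k y z j * (qpoch_inf A q * qpoch_inf (u/c) q * qpoch_inf (u/d) q * qpoch_inf (A*q/(c*d)) q
     / (qpoch_inf u q * qpoch_inf (A*q/c) q * qpoch_inf (A*q/d) q * qpoch_inf x q))
     = (qpoch_inf (q*k) q * qpoch_inf (A*q/(c*d)) q * qpoch_inf (q*a/y) q * qpoch_inf (q*a/z) q
        / (qpoch_inf (q*k/y) q * qpoch_inf (q*k/z) q * qpoch_inf (q*a) q * qpoch_inf x q)) * (q^(j^2) / qpoch q q j)"
    unfolding Cj_def by (rule absC[OF sp1 sp2 sp3 sp4 sp5 sp6 k1])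
  also have "\<dots> = Pref q a k y z * (q^(j*j) / qpoch q q j)"
    unfolding Pref_def gcd x_def by (simp add: power2_eq_square)
  finally show "mterm q a k y z j sums (Pref q a k y z * (q^(j*j) / qpoch q q j))" using S1 by simp
  show "summable (\<lambda>n. norm (mterm q a k y z j n))"
    unfolding M norm_mult by (rule summable_mult[OF tt_summable[OF hq hx]])
qed

lemma rr_norm_summable:
  assumes "norm q < 1"
  shows "summable (\<lambda>n. norm (q^(n*n) / qpoch q q n))"
proof -
  obtain c where c: "c > 0" "\<And>n. norm (qpoch q q n) \<ge> c" using qpochqq_bounds(1)[OF assms(1)] by blast
  show ?thesis
  proof (rule summable_comparison_test'[where N=0])
    show "summable (\<lambda>n. norm q ^ n / c)" using assms(1) by (intro summable_divide summable_geometric) auto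
    fix n :: nat
    have "norm q ^ (n*n) \<le> norm q ^ n" using assms(1) by (intro power_decreasing) (auto simp: le_square)
    then show "norm (norm (q^(n*n) / qpoch q q n)) \<le> norm q ^ n / c"
      using c by (simp add: norm_divide norm_power) (intro frac_le, auto)
  qed
qed


theorem mainTheorem14:
  fixes q a k y z :: complex
  assumes hq: "norm q < 1"
    and hqa: "norm (q * a / (y * z)) < 1"
    and hk: "k \<noteq> 1"
    and ha: "a \<noteq> 0" and hy: "y \<noteq> 0" and hz: "z \<noteq> 0"
    and hden_a: "\<And>m. qpoch (a * q) q m \<noteq> 0"
    and hden_y: "\<And>m. qpoch (q * k / y) q m \<noteq> 0"
    and hden_z: "\<And>m. qpoch (q * k / z) q m \<noteq> 0"
    and habs: "(\<lambda>(j, n). norm (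
        (1 - k * q ^ (2 * n + 2 * j)) * qpoch (k / a) q n * qpoch k q (n + 2 * j)
          * qpoch (y * q ^ j) q n * qpoch (z * q ^ j) q n
          * qpoch (q * a / y) q j * qpoch (q * a / z) q j
        / ((1 - k) * qpoch q q n * qpoch (a * q) q (n + 2 * j)
          * qpoch (q * k / y) q (n + j) * qpoch (q * k / z) q (n + j) * qpoch q q j)
        * (q * a / (y * z)) ^ n * q ^ (j ^ 2))) summable_on UNIV"
  shows "(\<Sum>\<^sub>\<infinity>(j, n)\<in>(UNIV :: (nat \<times> nat) set).
        (1 - k * q ^ (2 * n + 2 * j)) * qpoch (k / a) q n * qpoch k q (n + 2 * j)
          * qpoch (y * q ^ j) q n * qpoch (z * q ^ j) q n
          * qpoch (q * a / y) q j * qpoch (q * a / z) q j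
        / ((1 - k) * qpoch q q n * qpoch (a * q) q (n + 2 * j)
          * qpoch (q * k / y) q (n + j) * qpoch (q * k / z) q (n + j) * qpoch q q j)
        * (q * a / (y * z)) ^ n * q ^ (j ^ 2))
    = (qpoch_inf (q * k) q * qpoch_inf (q * k / (y * z)) q
         * qpoch_inf (q * a / y) q * qpoch_inf (q * a / z) q)
      / (qpoch_inf (q * k / y) q * qpoch_inf (q * k / z) q
         * qpoch_inf (q * a) q * qpoch_inf (q * a / (y * z)) q)
      * (1 / (qpoch_inf q (q ^ 5) * qpoch_inf (q ^ 4) (q ^ 5)))"
proof (cases "q = 0")
  case True
  have zero_inf: "qpoch_inf 0 p = 1" for p :: complex by (simp add: qpoch_inf_def)
  have T: "mterm q a k y z j n = (if (j, n) = (0, 0) then 1 else 0)" for j n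
  proof (cases "j = 0")
    case j0: True
    show ?thesis
    proof (cases "n = 0")
      case True then show ?thesis using j0 hk by (simp add: mterm_def)
    next
      case False then show ?thesis using j0 \<open>q = 0\<close> by (simp add: mterm_def)
    qed
  next
    case False then show ?thesis using \<open>q = 0\<close> by (simp add: mterm_def)
  qed
  have "(\<Sum>\<^sub>\<infinity>(j, n)\<in>(UNIV :: (nat \<times> nat) set). mterm q a k y z j n)
      = (\<Sum>\<^sub>\<infinity>(j, n)\<in>{(0::nat, 0::nat)}. mterm q a k y z j n)"
    by (rule infsum_cong_neutral) (auto simp: T split: if_splits)
  also have "\<dots> = 1" by (simp add: T)
  finally have L: "(\<Sum>\<^sub>\<infinity>(j, n)\<in>(UNIV :: (nat \<times> nat) set). mterm q a k y z j n) = 1" .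
  show ?thesis unfolding mterm_def[symmetric] L using True by (simp add: zero_inf)
next
  case False
  note q0 = False
  have S: "(\<lambda>(j, n). mterm q a k y z j n) summable_on UNIV"
  proof (rule abs_summable_summable)
    have "(\<lambda>x. norm ((\<lambda>(j, n). mterm q a k y z j n) x)) = (\<lambda>(j, n). norm (mterm q a k y z j n))"
      by (auto simp: fun_eq_iff)
    then show "(\<lambda>x. norm ((\<lambda>(j, n). mterm q a k y z j n) x)) summable_on UNIV"
      using habs unfolding mterm_def[symmetric] by simp
  qed
  have S': "(\<lambda>(j, n). mterm q a k y z j n) summable_on Sigma UNIV (\<lambda>_. UNIV)" using S by simp
  have inner: "infsum (mterm q a k y z j) UNIV = Pref q a k y z * (q^(j*j) / qpoch q q j)" for j
  proof -
    note I = inner_sums[OF hq q0 hqa hk ha hy hz hden_a hden_y hden_z, of j]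
    show ?thesis using norm_summable_imp_has_sum[OF I(2) I(1)] by (simp add: infsumI)
  qed
  have outer: "((\<lambda>j. Pref q a k y z * (q^(j*j) / qpoch q q j)) has_sum
      (Pref q a k y z * (1 / (qpoch_inf q (q^5) * qpoch_inf (q^4) (q^5))))) UNIV"
    by (intro has_sum_cmult_right norm_summable_imp_has_sum rr_norm_summable rogers_ramanujan hq q0)
  have "(\<Sum>\<^sub>\<infinity>(j, n)\<in>(UNIV :: (nat \<times> nat) set). mterm q a k y z j n)
      = infsum (\<lambda>j. infsum (mterm q a k y z j) UNIV) UNIV"
    using infsum_Sigma'_banach[OF S'] by simp
  also have "\<dots> = infsum (\<lambda>j. Pref q a k y z * (q^(j*j) / qpoch q q j)) UNIV"
    unfolding inner ..
  also have "\<dots> = Pref q a k y z * (1 / (qpoch_inf q (q^5) * qpoch_inf (q^4) (q^5)))"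
    using outer by (simp add: infsumI)
  finally show ?thesis unfolding mterm_def[symmetric] Pref_def .
qed

end
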